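(* The set $\mathcal S\subseteq\mathcal G$ of multiplication tables $G$ such that $\overline G$ is simple is comeager in $\mathcal G$.
   Context: Let $\mathbb N=\{1,2,3,\dots\}$. Equip $\mathbb N^{\mathbb N\times\mathbb N}$ with the product topology of the discrete topology on $\mathbb N$. Let $\mathcal G$ be the subspace consisting of those $A\in\mathbb N^{\mathbb N\times\mathbb N}$ that are the multiplication table of a group on the underlying set $\mathbb N$ whose identity element is $1$. For $G\in\mathcal G$, $\overline G$ denotes the group on $\mathbb N$ with multiplication table $G$. *)

theory Defs
  imports "HOL-Analysis.Analysis" "HOL-Algebra.Coset"
begin

definition Npos :: "nat set" where "Npos = {1..}"

text \<open>N^(N x N) with the product of discrete topologies (functions are extensional,
  i.e. they are undefined outside N x N, as in Analysis' product_topology).\<close>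
definition table_top :: "(nat \<times> nat \<Rightarrow> nat) topology" where
  "table_top = product_topology (\<lambda>_. discrete_topology Npos) (Npos \<times> Npos)"

definition grp_of :: "(nat \<times> nat \<Rightarrow> nat) \<Rightarrow> nat monoid" where
  "grp_of A = \<lparr>carrier = Npos, mult = (\<lambda>x y. A (x, y)), one = 1\<rparr>"

definition Gtables :: "(nat \<times> nat \<Rightarrow> nat) set" where
  "Gtables = {A \<in> topspace table_top. group (grp_of A)}"

definition simple_grp :: "('a, 'b) monoid_scheme \<Rightarrow> bool" where
  "simple_grp G \<longleftrightarrow> group G \<and> carrier G \<noteq> {\<one>\<^bsub>G\<^esub>} \<and>
     (\<forall>H. H \<lhd> G \<longrightarrow> H = {\<one>\<^bsub>G\<^esub>} \<or> H = carrier G)"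

definition nowhere_dense_in :: "'a topology \<Rightarrow> 'a set \<Rightarrow> bool" where
  "nowhere_dense_in X S \<longleftrightarrow> S \<subseteq> topspace X \<and> X interior_of (X closure_of S) = {}"

definition meager_in :: "'a topology \<Rightarrow> 'a set \<Rightarrow> bool" where
  "meager_in X S \<longleftrightarrow> S \<subseteq> topspace X \<and>
     (\<exists>\<F>. countable \<F> \<and> (\<forall>N\<in>\<F>. nowhere_dense_in X N) \<and> S \<subseteq> \<Union>\<F>)"

definition comeager_in :: "'a topology \<Rightarrow> 'a set \<Rightarrow> bool" where
  "comeager_in X S \<longleftrightarrow> S \<subseteq> topspace X \<and> meager_in X (topspace X - S)"

end

theory Submission
  imports Defs "HOL-Algebra.Bij" "HOL-Algebra.Generated_Groups"
begin


lemma BG_carrier[simp]: "carrier (BijGroup S) = Bij S"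
  by (simp add: BijGroup_def)

lemma BG_mult: "f \<in> Bij S \<Longrightarrow> g \<in> Bij S \<Longrightarrow> f \<otimes>\<^bsub>BijGroup S\<^esub> g = compose S f g"
  by (simp add: BijGroup_def)

lemma BG_mult_apply: "f \<in> Bij S \<Longrightarrow> g \<in> Bij S \<Longrightarrow> x \<in> S \<Longrightarrow> (f \<otimes>\<^bsub>BijGroup S\<^esub> g) x = f (g x)"
  by (simp add: BG_mult compose_def)

lemma BG_one: "\<one>\<^bsub>BijGroup S\<^esub> = (\<lambda>x\<in>S. x)"
  by (simp add: BijGroup_def)

lemma Bij_in: "f \<in> Bij S \<Longrightarrow> x \<in> S \<Longrightarrow> f x \<in> S"
  using Bij_imp_funcset by blast

definition pw :: "'a set \<Rightarrow> ('a \<Rightarrow> 'a) \<Rightarrow> int \<Rightarrow> 'a \<Rightarrow> 'a" where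
  "pw S p k = p [^]\<^bsub>BijGroup S\<^esub> k"

lemma pw_Bij: "p \<in> Bij S \<Longrightarrow> pw S p k \<in> Bij S"
proof -
  assume "p \<in> Bij S"
  then have "p \<in> carrier (BijGroup S)" by simp
  then have "p [^]\<^bsub>BijGroup S\<^esub> k \<in> carrier (BijGroup S)"
    by (rule group.int_pow_closed[OF group_BijGroup])
  then show ?thesis unfolding pw_def by simp
qed

lemma pw_in: "p \<in> Bij S \<Longrightarrow> x \<in> S \<Longrightarrow> pw S p k x \<in> S"
  by (rule Bij_in[OF pw_Bij])

lemma pw_0: "x \<in> S \<Longrightarrow> pw S p 0 x = x"
  unfolding pw_def int_pow_0 BG_one by simp

lemma pw_1: "p \<in> Bij S \<Longrightarrow> pw S p 1 = p"
proof -
  assume "p \<in> Bij S"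
  then have "p \<in> carrier (BijGroup S)" by simp
  then show ?thesis unfolding pw_def by (rule group.int_pow_1[OF group_BijGroup])
qed

lemma pw_add: "p \<in> Bij S \<Longrightarrow> x \<in> S \<Longrightarrow> pw S p (k + l) x = pw S p k (pw S p l x)"
proof -
  assume p: "p \<in> Bij S" and x: "x \<in> S"
  then have "p \<in> carrier (BijGroup S)" by simp
  then have "pw S p (k + l) = pw S p k \<otimes>\<^bsub>BijGroup S\<^esub> pw S p l"
    unfolding pw_def by (rule group.int_pow_mult[OF group_BijGroup])
  then show ?thesis using BG_mult_apply[OF pw_Bij[OF p] pw_Bij[OF p] x] by simp
qed

lemma pw_succ: "p \<in> Bij S \<Longrightarrow> x \<in> S \<Longrightarrow> pw S p (1 + k) x = p (pw S p k x)"
proof -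
  assume p: "p \<in> Bij S" and x: "x \<in> S"
  show ?thesis using pw_add[OF p x, of 1 k] pw_1[OF p] by simp
qed

definition orb :: "'a set \<Rightarrow> ('a \<Rightarrow> 'a) \<Rightarrow> 'a \<Rightarrow> 'a set" where
  "orb S p x = range (\<lambda>k. pw S p k x)"

definition free :: "'a set \<Rightarrow> ('a \<Rightarrow> 'a) \<Rightarrow> bool" where
  "free S p \<longleftrightarrow> (\<forall>x\<in>S. \<forall>k. k \<noteq> 0 \<longrightarrow> pw S p k x \<noteq> x)"

lemma orb_self: "x \<in> S \<Longrightarrow> x \<in> orb S p x"
  unfolding orb_def by (rule range_eqI[where x=0], rule pw_0[symmetric])

lemma orb_sub: "p \<in> Bij S \<Longrightarrow> x \<in> S \<Longrightarrow> orb S p x \<subseteq> S"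
  unfolding orb_def by (auto intro: pw_in)

lemma orb_pw: assumes "p \<in> Bij S" "x \<in> S" shows "orb S p (pw S p j x) = orb S p x"
proof -
  have "y \<in> orb S p x" if yy: "y \<in> orb S p (pw S p j x)" for y
  proof -
    obtain k where "y = pw S p k (pw S p j x)" using yy unfolding orb_def by blast
    then have "y = pw S p (k + j) x" using pw_add[OF assms] by simp
    then show "y \<in> orb S p x" unfolding orb_def by blast
  qed
  moreover have "y \<in> orb S p (pw S p j x)" if yy: "y \<in> orb S p x" for y
  proof -
    obtain k where "y = pw S p k x" using yy unfolding orb_def by blast
    then have "y = pw S p (k - j) (pw S p j x)" using pw_add[OF assms, of "k - j" j] by simp
    then show "y \<in> orb S p (pw S p j x)" unfolding orb_def by blast
  qed
  ultimately show ?thesis by blast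
qed

lemma orb_eq: assumes "p \<in> Bij S" "x \<in> S" "y \<in> orb S p x" shows "orb S p y = orb S p x"
proof -
  obtain j where "y = pw S p j x" using assms(3) unfolding orb_def by blast
  then show ?thesis using orb_pw[OF assms(1,2)] by simp
qed

lemma model_free:
  assumes S: "countable S" and p: "p \<in> Bij S" and fr: "free S p" and inf: "infinite (orb S p ` S)"
  shows "\<exists>F. bij_betw F (UNIV :: (nat \<times> int) set) S \<and> (\<forall>m k. p (F (m, k)) = F (m, 1 + k))"
proof -
  define Ob where "Ob = orb S p ` S"
  have cO: "countable Ob" using S Ob_def by simp
  define e where "e = from_nat_into Ob"
  have e: "bij_betw e UNIV Ob" unfolding e_def using bij_betw_from_nat_into[OF cO] inf Ob_def by simp
  define r where "r m = (SOME x. x \<in> e m)" for m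
  have r: "r m \<in> S \<and> e m = orb S p (r m)" for m
  proof -
    have "e m \<in> Ob" using e by (auto simp add: bij_betw_def)
    then obtain x0 where x0: "x0 \<in> S" "e m = orb S p x0" unfolding Ob_def by blast
    have "x0 \<in> e m" using x0 orb_self[of x0 S p] by simp
    then have "e m \<noteq> {}" by blast
    then have "r m \<in> e m" unfolding r_def by (simp add: some_in_eq)
    then show ?thesis using x0 orb_eq[OF p x0(1)] orb_sub[OF p x0(1)] by auto
  qed
  define F where "F = (\<lambda>(m, k). pw S p k (r m))"
  have "inj F"
  proof (rule injI)
    fix u v assume uv: "F u = F v"
    obtain m k m' k' where u: "u = (m, k)" and v: "v = (m', k')" by force
    have 1: "pw S p k (r m) = pw S p k' (r m')" using uv u v F_def by simp
    have "e m = orb S p (pw S p k (r m))" using r[of m] orb_pw[OF p, of "r m" k] by simp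
    also have "\<dots> = orb S p (pw S p k' (r m'))" using 1 by simp
    also have "\<dots> = e m'" using r[of m'] orb_pw[OF p, of "r m'" k'] by simp
    finally have "e m = e m'" .
    then have mm: "m = m'" using e by (simp add: bij_betw_def inj_def)
    have "pw S p (k - k') (r m) = pw S p (- k') (pw S p k (r m))"
      using pw_add[OF p r[of m, THEN conjunct1], of "-k'" k] by simp
    also have "\<dots> = pw S p (- k') (pw S p k' (r m))" using 1 mm by simp
    also have "\<dots> = r m" using pw_add[OF p r[of m, THEN conjunct1], of "-k'" k'] pw_0[of "r m" S p] r[of m] by simp
    finally have "pw S p (k - k') (r m) = r m" .
    then have "k - k' = 0" using fr r[of m] unfolding free_def by (metis (no_types))
    then have "k = k'" by simp
    then show "u = v" using u v mm by simp
  qed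
  moreover have "range F = S"
  proof
    show "range F \<subseteq> S" unfolding F_def using pw_in[OF p] r by auto
    show "S \<subseteq> range F"
    proof
      fix x assume x: "x \<in> S"
      have "orb S p x \<in> Ob" using x Ob_def by simp
      then obtain m where m: "e m = orb S p x" using e unfolding bij_betw_def by (metis imageE)
      have "r m \<in> orb S p x" using r[of m] m orb_self[of "r m" S p] by simp
      then obtain j where j: "r m = pw S p j x" unfolding orb_def by blast
      have "pw S p (- j) (r m) = x" using j pw_add[OF p x, of "-j" j] pw_0[OF x] by simp
      then have "F (m, - j) = x" unfolding F_def by simp
      then show "x \<in> range F" by (metis rangeI)
    qed
  qed
  moreover have "p (F (m, k)) = F (m, 1 + k)" for m k
    unfolding F_def using pw_succ[OF p r[THEN conjunct1]] by simp
  ultimately show ?thesis by (auto simp: bij_betw_def)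
qed

lemma conj_free:
  assumes S: "countable S" and p: "p \<in> Bij S" and q: "q \<in> Bij S"
    and fp: "free S p" and fq: "free S q"
    and ip: "infinite (orb S p ` S)" and iq: "infinite (orb S q ` S)"
  shows "\<exists>\<sigma>\<in>Bij S. \<sigma> \<otimes>\<^bsub>BijGroup S\<^esub> p \<otimes>\<^bsub>BijGroup S\<^esub> inv\<^bsub>BijGroup S\<^esub> \<sigma> = q"
proof -
  interpret BG: group "BijGroup S" by (rule group_BijGroup)
  obtain Fp where Fp: "bij_betw Fp (UNIV :: (nat \<times> int) set) S" "\<And>m k. p (Fp (m, k)) = Fp (m, 1 + k)"
    using model_free[OF S p fp ip] by blast
  obtain Fq where Fq: "bij_betw Fq (UNIV :: (nat \<times> int) set) S" "\<And>m k. q (Fq (m, k)) = Fq (m, 1 + k)"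
    using model_free[OF S q fq iq] by blast
  define \<sigma> where "\<sigma> = (\<lambda>x\<in>S. Fq (inv_into UNIV Fp x))"
  have b1: "bij_betw (inv_into UNIV Fp) S UNIV" using Fp(1) by (rule bij_betw_inv_into)
  have b2: "bij_betw (\<lambda>x. Fq (inv_into UNIV Fp x)) S S"
    using bij_betw_trans[OF b1 Fq(1)] by (simp add: comp_def)
  have "bij_betw \<sigma> S S"
  proof (rule bij_betw_cong[THEN iffD2])
    show "\<And>a. a \<in> S \<Longrightarrow> \<sigma> a = Fq (inv_into UNIV Fp a)" by (simp add: \<sigma>_def)
    show "bij_betw (\<lambda>x. Fq (inv_into UNIV Fp x)) S S" by (rule b2)
  qed
  moreover have "\<sigma> \<in> extensional S" unfolding \<sigma>_def by (rule restrict_extensional)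
  ultimately have sB: "\<sigma> \<in> Bij S" unfolding Bij_def by blast
  have key: "\<sigma> (p x) = q (\<sigma> x)" if x: "x \<in> S" for x
  proof -
    obtain m k where mk: "inv_into UNIV Fp x = (m, k)" by force
    have xF: "Fp (m, k) = x" using mk x Fp(1) by (metis bij_betw_inv_into_right)
    have px: "p x = Fp (m, 1 + k)" using xF Fp(2) by metis
    have "inv_into UNIV Fp (p x) = (m, 1 + k)"
      using px Fp(1) by (simp add: bij_betw_def)
    moreover have "p x \<in> S" using p x by (rule Bij_in)
    ultimately have "\<sigma> (p x) = Fq (m, 1 + k)" unfolding \<sigma>_def by simp
    also have "\<dots> = q (Fq (m, k))" using Fq(2) by metis
    also have "\<dots> = q (\<sigma> x)" unfolding \<sigma>_def using x mk by simp
    finally show ?thesis .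
  qed
  have comm: "\<sigma> \<otimes>\<^bsub>BijGroup S\<^esub> p = q \<otimes>\<^bsub>BijGroup S\<^esub> \<sigma>"
    unfolding BG_mult[OF sB p] BG_mult[OF q sB] compose_def using key by (simp add: restrict_def fun_eq_iff)
  have sc: "\<sigma> \<in> carrier (BijGroup S)" "p \<in> carrier (BijGroup S)" "q \<in> carrier (BijGroup S)"
    using sB p q by auto
  have "\<sigma> \<otimes>\<^bsub>BijGroup S\<^esub> p \<otimes>\<^bsub>BijGroup S\<^esub> inv\<^bsub>BijGroup S\<^esub> \<sigma>
      = q \<otimes>\<^bsub>BijGroup S\<^esub> \<sigma> \<otimes>\<^bsub>BijGroup S\<^esub> inv\<^bsub>BijGroup S\<^esub> \<sigma>"
    by (simp only: comm)
  also have "\<dots> = q \<otimes>\<^bsub>BijGroup S\<^esub> (\<sigma> \<otimes>\<^bsub>BijGroup S\<^esub> inv\<^bsub>BijGroup S\<^esub> \<sigma>)"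
    by (rule BG.m_assoc[OF sc(3) sc(1) BG.inv_closed[OF sc(1)]])
  also have "\<dots> = q" by (simp only: BG.r_inv[OF sc(1)] BG.r_one[OF sc(3)])
  finally show ?thesis using sB by blast
qed

definition XX :: "(nat \<times> int) set" where "XX = Npos \<times> UNIV"

lemma pw_snd_shift:
  assumes p: "p \<in> Bij XX" and sh: "\<And>z. z \<in> XX \<Longrightarrow> snd (p z) = snd z + 1" and z: "z \<in> XX"
  shows "snd (pw XX p k z) = snd z + k"
proof (induct k rule: int_induct[where k=0])
  case base
  then show ?case using pw_0[OF z] by simp
next
  case (step1 i)
  have "pw XX p (i + 1) z = p (pw XX p i z)" using pw_succ[OF p z, of i] by (simp add: add.commute)
  then show ?case using sh[OF pw_in[OF p z]] step1 by simp
next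
  case (step2 i)
  have "pw XX p i z = p (pw XX p (i - 1) z)" using pw_succ[OF p z, of "i - 1"] by simp
  then show ?case using sh[OF pw_in[OF p z]] step2 by simp
qed

lemma pw_drift:
  assumes p: "p \<in> Bij XX" and sh: "\<And>z. z \<in> XX \<Longrightarrow> p z = (fst z, snd z + d (fst z))" and z: "z \<in> XX"
  shows "pw XX p k z = (fst z, snd z + k * d (fst z))"
proof (induct k rule: int_induct[where k=0])
  case base
  then show ?case using pw_0[OF z] by simp
next
  case (step1 i)
  have "pw XX p (i + 1) z = p (pw XX p i z)" using pw_succ[OF p z, of i] by (simp add: add.commute)
  moreover have "p (pw XX p i z) = (fst (pw XX p i z), snd (pw XX p i z) + d (fst (pw XX p i z)))"
    using sh[OF pw_in[OF p z]] by blast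
  ultimately show ?case using step1 by (simp add: algebra_simps)
next
  case (step2 i)
  have "pw XX p i z = p (pw XX p (i - 1) z)" using pw_succ[OF p z, of "i - 1"] by simp
  moreover have "p (pw XX p (i - 1) z) = (fst (pw XX p (i - 1) z), snd (pw XX p (i - 1) z) + d (fst (pw XX p (i - 1) z)))"
    using sh[OF pw_in[OF p z]] by blast
  ultimately have e: "pw XX p i z = (fst (pw XX p (i - 1) z), snd (pw XX p (i - 1) z) + d (fst (pw XX p (i - 1) z)))" by simp
  obtain w1 w2 where w: "pw XX p (i - 1) z = (w1, w2)" by force
  have e2: "pw XX p i z = (w1, w2 + d w1)" using e w by simp
  have "(fst z, snd z + i * d (fst z)) = (w1, w2 + d w1)" using e2 step2 by metis
  then have w1: "w1 = fst z" and "snd z + i * d (fst z) = w2 + d w1" by auto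
  then have "w2 = snd z + (i - 1) * d (fst z)" by (simp add: algebra_simps)
  note w1 this
  then show ?case using w by simp
qed

lemma infinite_Npos: "infinite Npos"
  unfolding Npos_def by (rule infinite_Ici)

lemma orbits_infinite:
  assumes T: "infinite T" and f: "f ` T \<subseteq> S" and inj: "inj_on (\<lambda>x. orb S p (f x)) T"
  shows "infinite (orb S p ` S)"
proof
  assume "finite (orb S p ` S)"
  moreover have "(\<lambda>x. orb S p (f x)) ` T \<subseteq> orb S p ` S" using f by auto
  ultimately have "finite ((\<lambda>x. orb S p (f x)) ` T)" by (rule finite_subset[rotated])
  then show False using T inj finite_imageD by blast
qed

lemma snd_shift_free_inf:
  assumes p: "p \<in> Bij XX" and sh: "\<And>z. z \<in> XX \<Longrightarrow> snd (p z) = snd z + 1"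
  shows "free XX p" "infinite (orb XX p ` XX)"
proof -
  show "free XX p" unfolding free_def
  proof (intro ballI allI impI)
    fix z k assume z: "z \<in> XX" and k: "(k::int) \<noteq> 0"
    show "pw XX p k z \<noteq> z" using pw_snd_shift[OF p sh z, of k] k by auto
  qed
  show "infinite (orb XX p ` XX)"
  proof (rule orbits_infinite[OF infinite_Npos, of "\<lambda>x. (x, 0)"])
    show "(\<lambda>x. (x, 0)) ` Npos \<subseteq> XX" by (auto simp: XX_def)
    show "inj_on (\<lambda>x. orb XX p (x, 0)) Npos"
    proof (rule inj_onI)
      fix x y assume x: "x \<in> Npos" and y: "y \<in> Npos" and e: "orb XX p (x, 0) = orb XX p (y, 0)"
      have yx: "(y, 0) \<in> XX" "(x, 0) \<in> XX" using x y by (auto simp: XX_def)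
      have "(y, 0) \<in> orb XX p (x, 0)" using e orb_self[OF yx(1)] by simp
      then obtain k where k: "(y, 0) = pw XX p k (x, 0)" unfolding orb_def by blast
      have "snd (pw XX p k (x, 0)) = k" using pw_snd_shift[OF p sh yx(2), of k] by simp
      then have "k = 0" using k by (metis snd_conv)
      then show "x = y" using k pw_0[OF yx(2)] by simp
    qed
  qed
qed

lemma drift_free_inf:
  assumes p: "p \<in> Bij XX" and sh: "\<And>z. z \<in> XX \<Longrightarrow> p z = (fst z, snd z + d (fst z))"
    and d: "\<And>x. x \<in> Npos \<Longrightarrow> d x \<noteq> 0"
  shows "free XX p" "infinite (orb XX p ` XX)"
proof -
  show "free XX p" unfolding free_def
  proof (intro ballI allI impI)
    fix z k assume z: "z \<in> XX" and k: "(k::int) \<noteq> 0"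
    have "fst z \<in> Npos" using z by (auto simp: XX_def)
    then have "k * d (fst z) \<noteq> 0" using d k by simp
    then show "pw XX p k z \<noteq> z" using pw_drift[OF p sh z, of k] by (metis add_cancel_left_right prod.collapse snd_conv)
  qed
  show "infinite (orb XX p ` XX)"
  proof (rule orbits_infinite[OF infinite_Npos, of "\<lambda>x. (x, 0)"])
    show "(\<lambda>x. (x, 0)) ` Npos \<subseteq> XX" by (auto simp: XX_def)
    show "inj_on (\<lambda>x. orb XX p (x, 0)) Npos"
    proof (rule inj_onI)
      fix x y assume x: "x \<in> Npos" and y: "y \<in> Npos" and e: "orb XX p (x, 0) = orb XX p (y, 0)"
      have yx: "(y, 0) \<in> XX" "(x, 0) \<in> XX" using x y by (auto simp: XX_def)
      have "(y, 0) \<in> orb XX p (x, 0)" using e orb_self[OF yx(1)] by simp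
      then obtain k where k: "(y, 0) = pw XX p k (x, 0)" unfolding orb_def by blast
      then show "x = y" using pw_drift[OF p sh yx(2), of k] by simp
    qed
  qed
qed

lemma grp_of_simps[simp]: "carrier (grp_of A) = Npos" "x \<otimes>\<^bsub>grp_of A\<^esub> y = A (x, y)" "\<one>\<^bsub>grp_of A\<^esub> = 1"
  by (simp_all add: grp_of_def)

lemma one_Npos[simp]: "(1::nat) \<in> Npos" by (simp add: Npos_def)

definition psi :: "(nat \<times> nat \<Rightarrow> nat) \<Rightarrow> nat \<Rightarrow> (nat \<times> int \<Rightarrow> nat \<times> int)" where
  "psi A g = (\<lambda>z\<in>XX. (A (g, fst z), snd z))"

lemma psi_apply: "z \<in> XX \<Longrightarrow> psi A g z = (A (g, fst z), snd z)"
  by (simp add: psi_def)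

lemma psi_Bij:
  assumes grp: "group (grp_of A)" and g: "g \<in> Npos"
  shows "psi A g \<in> Bij XX"
proof -
  interpret G: group "grp_of A" by (rule grp)
  have "bij_betw (psi A g) XX XX"
  proof (rule bij_betwI[where g = "psi A (inv\<^bsub>grp_of A\<^esub> g)"])
    have ig: "inv\<^bsub>grp_of A\<^esub> g \<in> Npos" using G.inv_closed[of g] g by simp
    show "psi A g \<in> XX \<rightarrow> XX" using G.m_closed[of g] g by (auto simp: psi_def XX_def)
    show "psi A (inv\<^bsub>grp_of A\<^esub> g) \<in> XX \<rightarrow> XX" using G.m_closed[of "inv\<^bsub>grp_of A\<^esub> g"] ig by (auto simp: psi_def XX_def)
    show "psi A (inv\<^bsub>grp_of A\<^esub> g) (psi A g x) = x" if "x \<in> XX" for x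
    proof -
      have x1: "fst x \<in> Npos" using that by (auto simp: XX_def)
      have "A (g, fst x) \<in> Npos" using G.m_closed[of g "fst x"] g x1 by simp
      then have "psi A g x \<in> XX" using that by (auto simp: psi_def XX_def)
      moreover have "A (inv\<^bsub>grp_of A\<^esub> g, A (g, fst x)) = fst x"
        using G.inv_solve_left[of "fst x" g "A (g, fst x)"] G.m_closed[of g "fst x"] g x1 by simp
      ultimately show ?thesis using that by (simp add: psi_apply)
    qed
    show "psi A g (psi A (inv\<^bsub>grp_of A\<^esub> g) y) = y" if "y \<in> XX" for y
    proof -
      have y1: "fst y \<in> Npos" using that by (auto simp: XX_def)
      have "A (inv\<^bsub>grp_of A\<^esub> g, fst y) \<in> Npos" using G.m_closed[of _ "fst y"] ig y1 by simp
      then have "psi A (inv\<^bsub>grp_of A\<^esub> g) y \<in> XX" using that by (auto simp: psi_def XX_def)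
      moreover have "A (g, A (inv\<^bsub>grp_of A\<^esub> g, fst y)) = fst y"
        using G.m_assoc[of g "inv\<^bsub>grp_of A\<^esub> g" "fst y", symmetric] G.r_inv[of g] G.l_one[of "fst y"] ig g y1 by simp
      ultimately show ?thesis using that by (simp add: psi_apply)
    qed
  qed
  moreover have "psi A g \<in> extensional XX" unfolding psi_def by (rule restrict_extensional)
  ultimately show ?thesis unfolding Bij_def by blast
qed

lemma psi_hom:
  assumes grp: "group (grp_of A)"
  shows "psi A \<in> hom (grp_of A) (BijGroup XX)"
proof -
  interpret G: group "grp_of A" by (rule grp)
  have "psi A (A (g, h)) = psi A g \<otimes>\<^bsub>BijGroup XX\<^esub> psi A h" if g: "g \<in> Npos" and h: "h \<in> Npos" for g h
  proof -
    have "psi A g \<otimes>\<^bsub>BijGroup XX\<^esub> psi A h = compose XX (psi A g) (psi A h)"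
      by (rule BG_mult[OF psi_Bij[OF grp g] psi_Bij[OF grp h]])
    also have "\<dots> = psi A (A (g, h))"
    proof (rule ext)
      fix z show "compose XX (psi A g) (psi A h) z = psi A (A (g, h)) z"
      proof (cases "z \<in> XX")
        case True
        then have z1: "fst z \<in> Npos" by (auto simp: XX_def)
        have "psi A h z \<in> XX" using True z1 G.m_closed[of h "fst z"] h by (auto simp: psi_def XX_def)
        moreover have "A (A (g, h), fst z) = A (g, A (h, fst z))" using G.m_assoc[of g h "fst z"] g h z1 by simp
        ultimately show ?thesis using True by (simp add: compose_def psi_apply)
      next
        case False
        then show ?thesis by (simp add: compose_def psi_def)
      qed
    qed
    finally show ?thesis by simp
  qed
  then show ?thesis unfolding hom_def using psi_Bij[OF grp] by auto
qed

lemma psi_inj: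
  assumes grp: "group (grp_of A)"
  shows "inj_on (psi A) Npos"
proof (rule inj_onI)
  interpret G: group "grp_of A" by (rule grp)
  fix g h assume g: "g \<in> Npos" and h: "h \<in> Npos" and e: "psi A g = psi A h"
  have z: "(1, 0) \<in> XX" by (simp add: XX_def Npos_def)
  have "psi A g (1, 0) = (g, 0)" using psi_apply[OF z] G.r_one[of g] g by simp
  moreover have "psi A h (1, 0) = (h, 0)" using psi_apply[OF z] G.r_one[of h] h by simp
  ultimately show "g = h" using e by simp
qed

lemma psi_pw:
  assumes grp: "group (grp_of A)" and a: "a \<in> Npos"
  shows "pw XX (psi A a) k = psi A (a [^]\<^bsub>grp_of A\<^esub> k)"
  unfolding pw_def using hom_int_pow[OF psi_hom[OF grp], of a, OF _ grp group_BijGroup] a by simp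

lemma int_pow_one_nat:
  assumes grp: "group G" and a: "a \<in> carrier G" and e: "a [^]\<^bsub>G\<^esub> (k::int) = \<one>\<^bsub>G\<^esub>" and k: "k \<noteq> 0"
  shows "\<exists>n::nat. 0 < n \<and> a [^]\<^bsub>G\<^esub> n = \<one>\<^bsub>G\<^esub>"
proof (cases "k > 0")
  case True
  have "a [^]\<^bsub>G\<^esub> (int (nat k)) = \<one>\<^bsub>G\<^esub>" using e True by simp
  then have "a [^]\<^bsub>G\<^esub> (nat k) = \<one>\<^bsub>G\<^esub>" by (simp only: int_pow_int)
  then show ?thesis using True by (intro exI[of _ "nat k"]) simp
next
  case False
  then have k': "k = - int (nat (- k))" by simp
  have h: "a [^]\<^bsub>G\<^esub> (- int (nat (- k))) = inv\<^bsub>G\<^esub> (a [^]\<^bsub>G\<^esub> (nat (- k)))"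
    by (rule group.int_pow_neg_int[OF grp a])
  have "inv\<^bsub>G\<^esub> (a [^]\<^bsub>G\<^esub> (nat (- k))) = \<one>\<^bsub>G\<^esub>"
    using e h k' by metis
  then have "a [^]\<^bsub>G\<^esub> (nat (- k)) = \<one>\<^bsub>G\<^esub>"
    using group.inv_eq_1_iff[OF grp monoid.nat_pow_closed[OF group.is_monoid[OF grp] a]] by simp
  then show ?thesis using False k by (intro exI[of _ "nat (- k)"]) simp
qed

lemma inf_order_free:
  assumes grp: "group (grp_of A)" and a: "a \<in> Npos"
    and ord: "\<And>n::nat. 0 < n \<Longrightarrow> a [^]\<^bsub>grp_of A\<^esub> n \<noteq> 1"
  shows "free XX (psi A a)" "infinite (orb XX (psi A a) ` XX)"
proof -
  interpret G: group "grp_of A" by (rule grp)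
  have pz: "pw XX (psi A a) k z = (A (a [^]\<^bsub>grp_of A\<^esub> k, fst z), snd z)" if "z \<in> XX" for k z
    using psi_pw[OF grp a, of k] psi_apply[OF that] by simp
  show "free XX (psi A a)" unfolding free_def
  proof (intro ballI allI impI)
    fix z k assume z: "z \<in> XX" and k: "(k::int) \<noteq> 0"
    show "pw XX (psi A a) k z \<noteq> z"
    proof
      assume e: "pw XX (psi A a) k z = z"
      have z1: "fst z \<in> Npos" using z by (auto simp: XX_def)
      have ak: "a [^]\<^bsub>grp_of A\<^esub> k \<in> Npos" using G.int_pow_closed[of a k] a by simp
      have "(A (a [^]\<^bsub>grp_of A\<^esub> k, fst z), snd z) = z" using e pz[OF z, of k] by simp
      then have "A (a [^]\<^bsub>grp_of A\<^esub> k, fst z) = fst z" by (metis fst_conv)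
      then have ak1: "a [^]\<^bsub>grp_of A\<^esub> k = 1" using G.r_cancel_one[of "fst z" "a [^]\<^bsub>grp_of A\<^esub> k"] z1 ak by simp
      show False using int_pow_one_nat[OF grp, of a k] a ak1 k ord by auto
    qed
  qed
  show "infinite (orb XX (psi A a) ` XX)"
  proof (rule orbits_infinite[of UNIV "\<lambda>i. (1, i)"])
    show "infinite (UNIV :: int set)" by (rule infinite_UNIV_int)
    show "(\<lambda>i. (1, i)) ` UNIV \<subseteq> XX" by (auto simp: XX_def Npos_def)
    show "inj_on (\<lambda>i. orb XX (psi A a) (1, i)) UNIV"
    proof (rule inj_onI)
      fix i j :: int assume e: "orb XX (psi A a) (1, i) = orb XX (psi A a) (1, j)"
      have yx: "(1, i) \<in> XX" "(1, j) \<in> XX" by (auto simp: XX_def Npos_def)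
      have "(1, j) \<in> orb XX (psi A a) (1, i)" using e orb_self[OF yx(2)] by simp
      then obtain k where k: "(1, j) = pw XX (psi A a) k (1, i)" unfolding orb_def by blast
      then show "i = j" using pz[OF yx(1), of k] by simp
    qed
  qed
qed

lemma fin_order_color:
  assumes grp: "group (grp_of A)" and a: "a \<in> Npos" and a1: "a \<noteq> 1"
    and n: "0 < n" and an: "a [^]\<^bsub>grp_of A\<^esub> (n::nat) = 1"
  shows "\<exists>jj::nat \<Rightarrow> nat. \<forall>x\<in>Npos. jj x \<noteq> jj (A (inv\<^bsub>grp_of A\<^esub> a, x))"
proof -
  interpret G: group "grp_of A" by (rule grp)
  define P where "P k = a [^]\<^bsub>grp_of A\<^esub> (k::nat)" for k
  have l1: "A (1, x) = x" if "x \<in> Npos" for x using G.l_one[of x] that by simp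
  have Pc: "P k \<in> Npos" for k unfolding P_def using G.nat_pow_closed[of a k] a by simp
  have Padd: "A (P k, A (P l, x)) = A (P (k + l), x)" if x: "x \<in> Npos" for k l x
  proof -
    have "A (P k, A (P l, x)) = A (A (P k, P l), x)" using G.m_assoc[of "P k" "P l" x] Pc x by simp
    also have "A (P k, P l) = P (k + l)" unfolding P_def using G.nat_pow_mult[of a k l] a by simp
    finally show ?thesis .
  qed
  have P0: "A (P 0, x) = x" if "x \<in> Npos" for x unfolding P_def using that G.l_one[of x] by simp
  have Pnm: "P (n * m) = 1" for m
    unfolding P_def using G.nat_pow_pow[of a n m, symmetric] an a G.nat_pow_one[of m] by simp
  define Ob where "Ob x = {A (P k, x) | k. True}" for x
  have self: "x \<in> Ob x" if "x \<in> Npos" for x unfolding Ob_def using P0[OF that] by (metis (mono_tags, lifting) mem_Collect_eq)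
  have Obsub: "Ob x \<subseteq> Npos" if "x \<in> Npos" for x
    unfolding Ob_def using G.m_closed[of _ x] Pc that by auto
  have F1: "x \<in> Ob y" if x: "x \<in> Npos" and y: "y \<in> Ob x" for x y
  proof -
    obtain k where k: "y = A (P k, x)" using y unfolding Ob_def by blast
    have "A (P (n * k - k), y) = A (P (n * k - k + k), x)" using k Padd[OF x] by simp
    also have "n * k - k + k = n * k" using n by (simp add: le_add_diff_inverse2)
    also have "A (P (n * k), x) = x" using Pnm l1 x by simp
    finally show ?thesis unfolding Ob_def by blast
  qed
  have F2: "z \<in> Ob x" if x: "x \<in> Npos" and y: "y \<in> Ob x" and z: "z \<in> Ob y" for x y z
  proof -
    obtain k where k: "y = A (P k, x)" using y unfolding Ob_def by blast
    obtain l where l: "z = A (P l, y)" using z unfolding Ob_def by blast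
    have "z = A (P (l + k), x)" using k l Padd[OF x] by simp
    then show ?thesis unfolding Ob_def by blast
  qed
  have Obeq: "Ob y = Ob x" if x: "x \<in> Npos" and y: "y \<in> Ob x" for x y
  proof -
    have yN: "y \<in> Npos" using Obsub[OF x] y by blast
    show ?thesis using F2[OF x y] F2[OF yN F1[OF x y]] by blast
  qed
  have ia: "inv\<^bsub>grp_of A\<^esub> a = P (n - 1)"
  proof (rule G.inv_equality)
    have "P (n - 1) \<otimes>\<^bsub>grp_of A\<^esub> a = a [^]\<^bsub>grp_of A\<^esub> (Suc (n - 1))"
      unfolding P_def using G.nat_pow_Suc[of a "n - 1"] by simp
    also have "Suc (n - 1) = n" using n by simp
    finally show "P (n - 1) \<otimes>\<^bsub>grp_of A\<^esub> a = \<one>\<^bsub>grp_of A\<^esub>" using an by simp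
    show "a \<in> carrier (grp_of A)" using a by simp
    show "P (n - 1) \<in> carrier (grp_of A)" using Pc by simp
  qed
  define t where "t x = (LEAST y. y \<in> Ob x)" for x
  have tO: "t x \<in> Ob x" if "x \<in> Npos" for x unfolding t_def by (rule LeastI[where P="\<lambda>y. y \<in> Ob x", OF self[OF that]])
  have tN: "t x \<in> Npos" if "x \<in> Npos" for x using tO[OF that] Obsub[OF that] by blast
  have ex: "\<exists>k. A (P k, t x) = x" if "x \<in> Npos" for x
  proof -
    have "x \<in> Ob (t x)" by (rule F1[OF that tO[OF that]])
    then obtain k where "x = A (P k, t x)" unfolding Ob_def by blast
    then show ?thesis by (intro exI[of _ k]) (rule sym)
  qed
  define jj where "jj x = (LEAST k. A (P k, t x) = x)" for x
  have jj: "A (P (jj x), t x) = x" if "x \<in> Npos" for x unfolding jj_def by (rule LeastI_ex[where P="\<lambda>k. A (P k, t x) = x", OF ex[OF that]])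
  have "jj x \<noteq> jj (A (inv\<^bsub>grp_of A\<^esub> a, x))" if x: "x \<in> Npos" for x
  proof
    assume e: "jj x = jj (A (inv\<^bsub>grp_of A\<^esub> a, x))"
    define y where "y = A (inv\<^bsub>grp_of A\<^esub> a, x)"
    have yO: "y \<in> Ob x" unfolding y_def ia Ob_def by blast
    have yN: "y \<in> Npos" using Obsub[OF x] yO by blast
    have "t y = t x" unfolding t_def using Obeq[OF x yO] by simp
    then have "y = x" using jj[OF x] jj[OF yN] e y_def by metis
    then have "inv\<^bsub>grp_of A\<^esub> a = 1"
      using G.r_cancel_one[of x "inv\<^bsub>grp_of A\<^esub> a"] x G.inv_closed[of a] a unfolding y_def by simp
    then show False using G.inv_eq_1_iff[of a] a a1 by simp
  qed
  then show ?thesis by blast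
qed

definition shear :: "(nat \<Rightarrow> int) \<Rightarrow> (nat \<times> int \<Rightarrow> nat \<times> int)" where
  "shear c = (\<lambda>z\<in>XX. (fst z, snd z + c (fst z)))"

lemma shear_apply: "z \<in> XX \<Longrightarrow> shear c z = (fst z, snd z + c (fst z))"
  by (simp add: shear_def)

lemma XX_pair: "z \<in> XX \<Longrightarrow> (fst z, j) \<in> XX"
  by (auto simp: XX_def)

lemma shear_in: "z \<in> XX \<Longrightarrow> shear c z \<in> XX"
  by (auto simp: shear_def XX_def)

lemma shear_Bij: "shear c \<in> Bij XX"
proof -
  have "bij_betw (shear c) XX XX"
  proof (rule bij_betwI[where g = "shear (\<lambda>x. - c x)"])
    show "shear c \<in> XX \<rightarrow> XX" using shear_in by blast
    show "shear (\<lambda>x. - c x) \<in> XX \<rightarrow> XX" using shear_in by blast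
    show "shear (\<lambda>x. - c x) (shear c x) = x" if "x \<in> XX" for x
      using that by (simp add: shear_apply XX_pair)
    show "shear c (shear (\<lambda>x. - c x) y) = y" if "y \<in> XX" for y
      using that by (simp add: shear_apply XX_pair)
  qed
  moreover have "shear c \<in> extensional XX" unfolding shear_def by (rule restrict_extensional)
  ultimately show ?thesis unfolding Bij_def by blast
qed

lemma shear_inv: "inv\<^bsub>BijGroup XX\<^esub> (shear c) = shear (\<lambda>x. - c x)"
proof (rule group.inv_equality[OF group_BijGroup])
  show "shear c \<in> carrier (BijGroup XX)" using shear_Bij by simp
  show "shear (\<lambda>x. - c x) \<in> carrier (BijGroup XX)" using shear_Bij by simp
  show "shear (\<lambda>x. - c x) \<otimes>\<^bsub>BijGroup XX\<^esub> shear c = \<one>\<^bsub>BijGroup XX\<^esub>"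
    unfolding BG_mult[OF shear_Bij shear_Bij] BG_one
    by (rule ext) (simp add: compose_def shear_apply XX_pair)
qed

lemma psi_inv:
  assumes grp: "group (grp_of A)" and a: "a \<in> Npos"
  shows "inv\<^bsub>BijGroup XX\<^esub> (psi A a) = psi A (inv\<^bsub>grp_of A\<^esub> a)"
proof -
  have gh: "group_hom (grp_of A) (BijGroup XX) (psi A)"
    by (simp add: group_hom_def group_hom_axioms_def grp group_BijGroup psi_hom[OF grp])
  show ?thesis using group_hom.hom_inv[OF gh, of a] a by simp
qed

lemma w_drift:
  fixes c :: "nat \<Rightarrow> int"
  assumes grp: "group (grp_of A)" and a: "a \<in> Npos"
  defines "w \<equiv> psi A a \<otimes>\<^bsub>BijGroup XX\<^esub> shear (\<lambda>x. - c x) \<otimes>\<^bsub>BijGroup XX\<^esub> inv\<^bsub>BijGroup XX\<^esub> (psi A a)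
      \<otimes>\<^bsub>BijGroup XX\<^esub> inv\<^bsub>BijGroup XX\<^esub> (shear (\<lambda>x. - c x))"
  shows "w \<in> Bij XX" "\<And>z. z \<in> XX \<Longrightarrow> w z = (fst z, snd z + (c (fst z) - c (A (inv\<^bsub>grp_of A\<^esub> a, fst z))))"
proof -
  interpret G: group "grp_of A" by (rule grp)
  interpret BG: group "BijGroup XX" by (rule group_BijGroup)
  have ia: "inv\<^bsub>grp_of A\<^esub> a \<in> Npos" using G.inv_closed[of a] a by simp
  define p where "p = psi A a"
  define q where "q = psi A (inv\<^bsub>grp_of A\<^esub> a)"
  define s where "s = shear (\<lambda>x. - c x)"
  define s' where "s' = shear c"
  have pB: "p \<in> Bij XX" unfolding p_def by (rule psi_Bij[OF grp a])
  have qB: "q \<in> Bij XX" unfolding q_def by (rule psi_Bij[OF grp ia])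
  have sB: "s \<in> Bij XX" unfolding s_def by (rule shear_Bij)
  have s'B: "s' \<in> Bij XX" unfolding s'_def by (rule shear_Bij)
  have iq: "inv\<^bsub>BijGroup XX\<^esub> (psi A a) = q" unfolding q_def by (rule psi_inv[OF grp a])
  have is': "inv\<^bsub>BijGroup XX\<^esub> s = s'" unfolding s_def s'_def shear_inv by simp
  have w: "w = p \<otimes>\<^bsub>BijGroup XX\<^esub> s \<otimes>\<^bsub>BijGroup XX\<^esub> q \<otimes>\<^bsub>BijGroup XX\<^esub> s'"
    unfolding w_def iq is'[unfolded s_def] p_def s_def ..
  have m1: "p \<otimes>\<^bsub>BijGroup XX\<^esub> s \<in> Bij XX" using BG.m_closed[of p s] pB sB by simp
  have m2: "p \<otimes>\<^bsub>BijGroup XX\<^esub> s \<otimes>\<^bsub>BijGroup XX\<^esub> q \<in> Bij XX" using BG.m_closed[of _ q] m1 qB by simp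
  show "w \<in> Bij XX" unfolding w using BG.m_closed[of _ s'] m2 s'B by simp
  fix z assume z: "z \<in> XX"
  obtain x i where zxi: "z = (x, i)" by force
  have x: "x \<in> Npos" using z zxi by (simp add: XX_def)
  define y where "y = A (inv\<^bsub>grp_of A\<^esub> a, x)"
  have y: "y \<in> Npos" unfolding y_def using G.m_closed[of _ x] ia x by simp
  have ay: "A (a, y) = x" unfolding y_def
    using G.m_assoc[of a "inv\<^bsub>grp_of A\<^esub> a" x, symmetric] G.r_inv[of a] G.l_one[of x] a ia x by simp
  have z1: "s' z = (x, i + c x)" using zxi z by (simp add: s'_def shear_apply)
  have z1X: "(x, i + c x) \<in> XX" using x by (simp add: XX_def)
  have z2: "q (x, i + c x) = (y, i + c x)" using z1X by (simp add: q_def psi_apply y_def)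
  have z2X: "(y, i + c x) \<in> XX" using y by (simp add: XX_def)
  have z3: "s (y, i + c x) = (y, i + c x - c y)" using z2X by (simp add: s_def shear_apply)
  have z3X: "(y, i + c x - c y) \<in> XX" using y by (simp add: XX_def)
  have z4: "p (y, i + c x - c y) = (x, i + c x - c y)" using z3X ay by (simp add: p_def psi_apply)
  have "w z = p (s (q (s' z)))"
    unfolding w using BG_mult_apply[OF m2 s'B z] BG_mult_apply[OF m1 qB] BG_mult_apply[OF pB sB]
      Bij_in[OF s'B z] Bij_in[OF qB Bij_in[OF s'B z]] by simp
  also have "\<dots> = (x, i + c x - c y)" using z1 z2 z3 z4 by simp
  finally show "w z = (fst z, snd z + (c (fst z) - c (A (inv\<^bsub>grp_of A\<^esub> a, fst z))))"
    using zxi y_def by simp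
qed

inductive_set ncl :: "('a, 'b) monoid_scheme \<Rightarrow> 'a set \<Rightarrow> 'a \<Rightarrow> 'a set" for K H u where
  ncl_one: "\<one>\<^bsub>K\<^esub> \<in> ncl K H u"
| ncl_pos: "y \<in> ncl K H u \<Longrightarrow> g \<in> H \<Longrightarrow> y \<otimes>\<^bsub>K\<^esub> (g \<otimes>\<^bsub>K\<^esub> u \<otimes>\<^bsub>K\<^esub> inv\<^bsub>K\<^esub> g) \<in> ncl K H u"
| ncl_neg: "y \<in> ncl K H u \<Longrightarrow> g \<in> H \<Longrightarrow> y \<otimes>\<^bsub>K\<^esub> (g \<otimes>\<^bsub>K\<^esub> inv\<^bsub>K\<^esub> u \<otimes>\<^bsub>K\<^esub> inv\<^bsub>K\<^esub> g) \<in> ncl K H u"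

context group
begin

lemma inv_cancel_left': "x \<in> carrier G \<Longrightarrow> y \<in> carrier G \<Longrightarrow> inv x \<otimes> (x \<otimes> y) = y"
  by (simp add: m_assoc[symmetric])

lemma ncl_sub: assumes H: "subgroup H G" and u: "u \<in> H" shows "y \<in> ncl G H u \<Longrightarrow> y \<in> H"
proof (induct rule: ncl.induct)
  case ncl_one then show ?case using H subgroup.one_closed by blast
next
  case (ncl_pos y g) then show ?case using H u subgroup.m_closed subgroup.m_inv_closed by metis
next
  case (ncl_neg y g) then show ?case using H u subgroup.m_closed subgroup.m_inv_closed by metis
qed

lemma ncl_mult: assumes H: "subgroup H G" and u: "u \<in> H" and y: "y \<in> ncl G H u"
  shows "z \<in> ncl G H u \<Longrightarrow> y \<otimes> z \<in> ncl G H u"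
proof (induct rule: ncl.induct)
  case ncl_one
  have "y \<in> carrier G" using ncl_sub[OF H u y] H subgroup.mem_carrier by metis
  then show ?case using y by simp
next
  case (ncl_pos z g)
  have c: "y \<in> carrier G" "z \<in> carrier G" "g \<in> carrier G" "u \<in> carrier G"
    using ncl_sub[OF H u y] ncl_sub[OF H u ncl_pos(1)] ncl_pos(3) u H subgroup.mem_carrier by metis+
  have "y \<otimes> (z \<otimes> (g \<otimes> u \<otimes> inv g)) = (y \<otimes> z) \<otimes> (g \<otimes> u \<otimes> inv g)" using c by (simp add: m_assoc)
  then show ?case using ncl.ncl_pos[OF ncl_pos(2) ncl_pos(3)] by simp
next
  case (ncl_neg z g)
  have c: "y \<in> carrier G" "z \<in> carrier G" "g \<in> carrier G" "u \<in> carrier G"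
    using ncl_sub[OF H u y] ncl_sub[OF H u ncl_neg(1)] ncl_neg(3) u H subgroup.mem_carrier by metis+
  have "y \<otimes> (z \<otimes> (g \<otimes> inv u \<otimes> inv g)) = (y \<otimes> z) \<otimes> (g \<otimes> inv u \<otimes> inv g)" using c by (simp add: m_assoc)
  then show ?case using ncl.ncl_neg[OF ncl_neg(2) ncl_neg(3)] by simp
qed

lemma ncl_u: assumes H: "subgroup H G" shows "u \<in> carrier G \<Longrightarrow> u \<in> ncl G H u"
proof -
  assume u: "u \<in> carrier G"
  have "\<one> \<otimes> (\<one> \<otimes> u \<otimes> inv \<one>) \<in> ncl G H u"
    by (rule ncl_pos[OF ncl_one]) (rule subgroup.one_closed[OF H])
  then show ?thesis using u by simp
qed

lemma ncl_conj_gen: assumes H: "subgroup H G" and u: "u \<in> H" and g: "g \<in> H" and h: "h \<in> H"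
  shows "g \<otimes> (h \<otimes> u \<otimes> inv h) \<otimes> inv g = (g \<otimes> h) \<otimes> u \<otimes> inv (g \<otimes> h)"
    "g \<otimes> (h \<otimes> inv u \<otimes> inv h) \<otimes> inv g = (g \<otimes> h) \<otimes> inv u \<otimes> inv (g \<otimes> h)"
proof -
  have c: "g \<in> carrier G" "h \<in> carrier G" "u \<in> carrier G" using g h u H subgroup.mem_carrier by metis+
  show "g \<otimes> (h \<otimes> u \<otimes> inv h) \<otimes> inv g = (g \<otimes> h) \<otimes> u \<otimes> inv (g \<otimes> h)"
    using c by (simp add: m_assoc inv_mult_group)
  show "g \<otimes> (h \<otimes> inv u \<otimes> inv h) \<otimes> inv g = (g \<otimes> h) \<otimes> inv u \<otimes> inv (g \<otimes> h)"
    using c by (simp add: m_assoc inv_mult_group)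
qed

lemma ncl_conj: assumes H: "subgroup H G" and u: "u \<in> H" and g: "g \<in> H"
  shows "y \<in> ncl G H u \<Longrightarrow> g \<otimes> y \<otimes> inv g \<in> ncl G H u"
proof (induct rule: ncl.induct)
  case ncl_one
  have "g \<in> carrier G" using g H subgroup.mem_carrier by metis
  then show ?case by (simp add: ncl.ncl_one)
next
  case (ncl_pos y h)
  have c: "g \<in> carrier G" "h \<in> carrier G" "u \<in> carrier G" "y \<in> carrier G"
    using g ncl_pos(3) u ncl_sub[OF H u ncl_pos(1)] H subgroup.mem_carrier by metis+
  have gh: "g \<otimes> h \<in> H" using g ncl_pos(3) H subgroup.m_closed by metis
  have "g \<otimes> (y \<otimes> (h \<otimes> u \<otimes> inv h)) \<otimes> inv g = (g \<otimes> y \<otimes> inv g) \<otimes> (g \<otimes> (h \<otimes> u \<otimes> inv h) \<otimes> inv g)"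
    using c by (simp add: m_assoc inv_cancel_left')
  also have "\<dots> = (g \<otimes> y \<otimes> inv g) \<otimes> ((g \<otimes> h) \<otimes> u \<otimes> inv (g \<otimes> h))"
    using ncl_conj_gen(1)[OF H u g ncl_pos(3)] by simp
  finally show ?case using ncl.ncl_pos[OF ncl_pos(2) gh] by simp
next
  case (ncl_neg y h)
  have c: "g \<in> carrier G" "h \<in> carrier G" "u \<in> carrier G" "y \<in> carrier G"
    using g ncl_neg(3) u ncl_sub[OF H u ncl_neg(1)] H subgroup.mem_carrier by metis+
  have gh: "g \<otimes> h \<in> H" using g ncl_neg(3) H subgroup.m_closed by metis
  have "g \<otimes> (y \<otimes> (h \<otimes> inv u \<otimes> inv h)) \<otimes> inv g = (g \<otimes> y \<otimes> inv g) \<otimes> (g \<otimes> (h \<otimes> inv u \<otimes> inv h) \<otimes> inv g)"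
    using c by (simp add: m_assoc inv_cancel_left')
  also have "\<dots> = (g \<otimes> y \<otimes> inv g) \<otimes> ((g \<otimes> h) \<otimes> inv u \<otimes> inv (g \<otimes> h))"
    using ncl_conj_gen(2)[OF H u g ncl_neg(3)] by simp
  finally show ?case using ncl.ncl_neg[OF ncl_neg(2) gh] by simp
qed

lemma ncl_inv: assumes H: "subgroup H G" and u: "u \<in> H"
  shows "y \<in> ncl G H u \<Longrightarrow> inv y \<in> ncl G H u"
proof (induct rule: ncl.induct)
  case ncl_one then show ?case by (simp add: ncl.ncl_one)
next
  case (ncl_pos y h)
  have c: "h \<in> carrier G" "u \<in> carrier G" "y \<in> carrier G"
    using ncl_pos(3) u ncl_sub[OF H u ncl_pos(1)] H subgroup.mem_carrier by metis+
  have "inv (y \<otimes> (h \<otimes> u \<otimes> inv h)) = \<one> \<otimes> (h \<otimes> inv u \<otimes> inv h) \<otimes> inv y"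
    using c by (simp add: inv_mult_group m_assoc)
  moreover have "\<one> \<otimes> (h \<otimes> inv u \<otimes> inv h) \<in> ncl G H u" by (rule ncl.ncl_neg[OF ncl.ncl_one ncl_pos(3)])
  ultimately show ?case using ncl_mult[OF H u _ ncl_pos(2)] by simp
next
  case (ncl_neg y h)
  have c: "h \<in> carrier G" "u \<in> carrier G" "y \<in> carrier G"
    using ncl_neg(3) u ncl_sub[OF H u ncl_neg(1)] H subgroup.mem_carrier by metis+
  have "inv (y \<otimes> (h \<otimes> inv u \<otimes> inv h)) = \<one> \<otimes> (h \<otimes> u \<otimes> inv h) \<otimes> inv y"
    using c by (simp add: inv_mult_group m_assoc)
  moreover have "\<one> \<otimes> (h \<otimes> u \<otimes> inv h) \<in> ncl G H u" by (rule ncl.ncl_pos[OF ncl.ncl_one ncl_neg(3)])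
  ultimately show ?case using ncl_mult[OF H u _ ncl_neg(2)] by simp
qed

end

lemma countable_XX: "countable XX"
  unfolding XX_def by simp

lemma group_core:
  assumes grp: "group (grp_of A)" and a: "a \<in> Npos" and a1: "a \<noteq> 1" and b: "b \<in> Npos"
  shows "\<exists>Sg. countable Sg \<and> Sg \<subseteq> Bij XX \<and> psi A ` Npos \<subseteq> Sg \<and>
            psi A b \<in> ncl (BijGroup XX) (generate (BijGroup XX) Sg) (psi A a)"
proof -
  interpret G: group "grp_of A" by (rule grp)
  interpret BG: group "BijGroup XX" by (rule group_BijGroup)
  have pa: "psi A a \<in> Bij XX" by (rule psi_Bij[OF grp a])
  have pb: "psi A b \<in> Bij XX" by (rule psi_Bij[OF grp b])
  obtain w s3 where s3: "s3 \<in> Bij XX" and wB: "w \<in> Bij XX" and fw: "free XX w" and iw: "infinite (orb XX w ` XX)"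
    and wform: "w = psi A a \<or> w = psi A a \<otimes>\<^bsub>BijGroup XX\<^esub> (s3 \<otimes>\<^bsub>BijGroup XX\<^esub> inv\<^bsub>BijGroup XX\<^esub> (psi A a) \<otimes>\<^bsub>BijGroup XX\<^esub> inv\<^bsub>BijGroup XX\<^esub> s3)"
  proof (cases "\<exists>n::nat. 0 < n \<and> a [^]\<^bsub>grp_of A\<^esub> n = 1")
    case False
    then have ord: "\<And>n::nat. 0 < n \<Longrightarrow> a [^]\<^bsub>grp_of A\<^esub> n \<noteq> 1" by blast
    show ?thesis using that[OF shear_Bij pa inf_order_free[OF grp a ord]] by blast
  next
    case True
    then obtain n :: nat where n: "0 < n" "a [^]\<^bsub>grp_of A\<^esub> n = 1" by blast
    obtain jj :: "nat \<Rightarrow> nat" where jj: "\<forall>x\<in>Npos. jj x \<noteq> jj (A (inv\<^bsub>grp_of A\<^esub> a, x))"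
      using fin_order_color[OF grp a a1 n] by blast
    define c where "c x = int (jj x)" for x
    define s where "s = shear (\<lambda>x. - c x)"
    define w0 where "w0 = psi A a \<otimes>\<^bsub>BijGroup XX\<^esub> s \<otimes>\<^bsub>BijGroup XX\<^esub> inv\<^bsub>BijGroup XX\<^esub> (psi A a)
      \<otimes>\<^bsub>BijGroup XX\<^esub> inv\<^bsub>BijGroup XX\<^esub> s"
    have w0B: "w0 \<in> Bij XX" and w0a: "\<And>z. z \<in> XX \<Longrightarrow> w0 z = (fst z, snd z + (c (fst z) - c (A (inv\<^bsub>grp_of A\<^esub> a, fst z))))"
      using w_drift[OF grp a, where c = c] unfolding w0_def s_def by blast+
    have d: "c x - c (A (inv\<^bsub>grp_of A\<^esub> a, x)) \<noteq> 0" if "x \<in> Npos" for x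
      using jj that unfolding c_def by simp
    have fi: "free XX w0" "infinite (orb XX w0 ` XX)"
      using drift_free_inf[OF w0B w0a d] by blast+
    have sB: "s \<in> Bij XX" unfolding s_def by (rule shear_Bij)
    have "w0 = psi A a \<otimes>\<^bsub>BijGroup XX\<^esub> (s \<otimes>\<^bsub>BijGroup XX\<^esub> inv\<^bsub>BijGroup XX\<^esub> (psi A a) \<otimes>\<^bsub>BijGroup XX\<^esub> inv\<^bsub>BijGroup XX\<^esub> s)"
      unfolding w0_def using pa sB by (simp add: BG.m_assoc BG_carrier[symmetric] del: BG_carrier)
    then show ?thesis using that[OF sB w0B fi] by blast
  qed
  define tau where "tau = shear (\<lambda>_. 1)"
  have tB: "tau \<in> Bij XX" unfolding tau_def by (rule shear_Bij)
  have tsh: "snd (tau z) = snd z + 1" if "z \<in> XX" for z unfolding tau_def using that by (simp add: shear_apply)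
  define bt where "bt = psi A b \<otimes>\<^bsub>BijGroup XX\<^esub> tau"
  have btB: "bt \<in> Bij XX" unfolding bt_def using BG.m_closed[of "psi A b" tau] pb tB by simp
  have btsh: "snd (bt z) = snd z + 1" if z: "z \<in> XX" for z
  proof -
    have "bt z = psi A b (tau z)" unfolding bt_def by (rule BG_mult_apply[OF pb tB z])
    also have "\<dots> = (A (b, fst (tau z)), snd (tau z))" by (rule psi_apply[OF Bij_in[OF tB z]])
    finally show ?thesis using tsh[OF z] by simp
  qed
  obtain \<sigma>1 where s1: "\<sigma>1 \<in> Bij XX" and e1: "\<sigma>1 \<otimes>\<^bsub>BijGroup XX\<^esub> w \<otimes>\<^bsub>BijGroup XX\<^esub> inv\<^bsub>BijGroup XX\<^esub> \<sigma>1 = bt"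
    using conj_free[OF countable_XX wB btB fw snd_shift_free_inf(1)[OF btB btsh] iw snd_shift_free_inf(2)[OF btB btsh]] by blast
  obtain \<sigma>2 where s2: "\<sigma>2 \<in> Bij XX" and e2: "\<sigma>2 \<otimes>\<^bsub>BijGroup XX\<^esub> w \<otimes>\<^bsub>BijGroup XX\<^esub> inv\<^bsub>BijGroup XX\<^esub> \<sigma>2 = tau"
    using conj_free[OF countable_XX wB tB fw snd_shift_free_inf(1)[OF tB tsh] iw snd_shift_free_inf(2)[OF tB tsh]] by blast
  define Sg where "Sg = psi A ` Npos \<union> {s3, \<sigma>1, \<sigma>2}"
  have SgB: "Sg \<subseteq> Bij XX" unfolding Sg_def using psi_Bij[OF grp] s3 s1 s2 by auto
  define Hc where "Hc = generate (BijGroup XX) Sg"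
  have Hs: "subgroup Hc (BijGroup XX)" unfolding Hc_def using BG.generate_is_subgroup[of Sg] SgB by simp
  have inH: "x \<in> Hc" if "x \<in> Sg" for x unfolding Hc_def using that by (rule generate.incl)
  have paH: "psi A a \<in> Hc" using inH a unfolding Sg_def by blast
  have s3H: "s3 \<in> Hc" "\<sigma>1 \<in> Hc" "\<sigma>2 \<in> Hc" using inH unfolding Sg_def by blast+
  have wN: "w \<in> ncl (BijGroup XX) Hc (psi A a)"
    using wform
  proof
    assume "w = psi A a" then show ?thesis using BG.ncl_u[OF Hs] pa by simp
  next
    assume w: "w = psi A a \<otimes>\<^bsub>BijGroup XX\<^esub> (s3 \<otimes>\<^bsub>BijGroup XX\<^esub> inv\<^bsub>BijGroup XX\<^esub> (psi A a) \<otimes>\<^bsub>BijGroup XX\<^esub> inv\<^bsub>BijGroup XX\<^esub> s3)"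
    show ?thesis unfolding w by (rule ncl_neg[OF BG.ncl_u[OF Hs] s3H(1)]) (simp add: pa)
  qed
  have c1: "bt \<in> ncl (BijGroup XX) Hc (psi A a)"
    using BG.ncl_conj[OF Hs paH s3H(2) wN] e1 by simp
  have c2: "\<sigma>2 \<otimes>\<^bsub>BijGroup XX\<^esub> inv\<^bsub>BijGroup XX\<^esub> w \<otimes>\<^bsub>BijGroup XX\<^esub> inv\<^bsub>BijGroup XX\<^esub> \<sigma>2 \<in> ncl (BijGroup XX) Hc (psi A a)"
    by (rule BG.ncl_conj[OF Hs paH s3H(3) BG.ncl_inv[OF Hs paH wN]])
  have c2': "\<sigma>2 \<otimes>\<^bsub>BijGroup XX\<^esub> inv\<^bsub>BijGroup XX\<^esub> w \<otimes>\<^bsub>BijGroup XX\<^esub> inv\<^bsub>BijGroup XX\<^esub> \<sigma>2 = inv\<^bsub>BijGroup XX\<^esub> tau"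
    unfolding e2[symmetric] using s2 wB by (simp add: BG.inv_mult_group BG.m_assoc BG_carrier[symmetric] del: BG_carrier)
  have "bt \<otimes>\<^bsub>BijGroup XX\<^esub> inv\<^bsub>BijGroup XX\<^esub> tau = psi A b"
    unfolding bt_def using pb tB by (simp add: BG.m_assoc BG_carrier[symmetric] del: BG_carrier)
  then have "psi A b \<in> ncl (BijGroup XX) Hc (psi A a)"
    using BG.ncl_mult[OF Hs paH c1 c2] c2' by simp
  moreover have "countable Sg" unfolding Sg_def by simp
  ultimately show ?thesis using SgB unfolding Hc_def Sg_def by blast
qed



definition ev :: "('a, 'b) monoid_scheme \<Rightarrow> (bool \<times> 'a) list \<Rightarrow> 'a" where
  "ev K ws = foldr (\<lambda>p acc. (if fst p then snd p else inv\<^bsub>K\<^esub> (snd p)) \<otimes>\<^bsub>K\<^esub> acc) ws \<one>\<^bsub>K\<^esub>"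

lemma (in group) ev_closed: "set ws \<subseteq> UNIV \<times> carrier G \<Longrightarrow> ev G ws \<in> carrier G"
  by (induct ws) (auto simp: ev_def)

lemma (in group) ev_append: "set ws \<subseteq> UNIV \<times> carrier G \<Longrightarrow> set vs \<subseteq> UNIV \<times> carrier G \<Longrightarrow>
    ev G (ws @ vs) = ev G ws \<otimes> ev G vs"
proof (induct ws)
  case Nil then show ?case using ev_closed[of vs] by (simp add: ev_def)
next
  case (Cons p ws)
  have c: "ev G ws \<in> carrier G" "ev G vs \<in> carrier G" "snd p \<in> carrier G"
    using Cons.prems ev_closed by auto
  have "ev G ((p # ws) @ vs) = (if fst p then snd p else inv (snd p)) \<otimes> ev G (ws @ vs)"
    by (simp add: ev_def)
  also have "\<dots> = (if fst p then snd p else inv (snd p)) \<otimes> (ev G ws \<otimes> ev G vs)"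
    using Cons by simp
  also have "\<dots> = ((if fst p then snd p else inv (snd p)) \<otimes> ev G ws) \<otimes> ev G vs"
    using c by (simp add: m_assoc)
  also have "(if fst p then snd p else inv (snd p)) \<otimes> ev G ws = ev G (p # ws)"
    by (simp add: ev_def)
  finally show ?case .
qed

lemma (in group) countable_generate:
  assumes S: "countable S" and Sc: "S \<subseteq> carrier G"
  shows "countable (generate G S)"
proof -
  have "x \<in> ev G ` lists (UNIV \<times> S)" if "x \<in> generate G S" for x
    using that
  proof (induct rule: generate.induct)
    case one
    have "ev G [] = \<one>" by (simp add: ev_def)
    moreover have "[] \<in> lists (UNIV \<times> S)" by simp
    ultimately show ?case by (metis image_eqI)
  next
    case (incl h)
    have "ev G [(True, h)] = h" using incl Sc by (auto simp: ev_def)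
    moreover have "[(True, h)] \<in> lists (UNIV \<times> S)" using incl by simp
    ultimately show ?case by (metis image_eqI)
  next
    case (inv h)
    have "ev G [(False, h)] = inv h" using inv Sc by (auto simp: ev_def)
    moreover have "[(False, h)] \<in> lists (UNIV \<times> S)" using inv by simp
    ultimately show ?case by (metis image_eqI)
  next
    case (eng h1 h2)
    obtain ws where ws: "ws \<in> lists (UNIV \<times> S)" "h1 = ev G ws" using eng(2) by blast
    obtain vs where vs: "vs \<in> lists (UNIV \<times> S)" "h2 = ev G vs" using eng(4) by blast
    have "set ws \<subseteq> UNIV \<times> carrier G" "set vs \<subseteq> UNIV \<times> carrier G" using ws vs Sc by auto
    then have "ev G (ws @ vs) = h1 \<otimes> h2" using ev_append ws vs by simp
    moreover have "ws @ vs \<in> lists (UNIV \<times> S)" using ws vs by simp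
    ultimately show ?case by (metis image_eqI)
  qed
  then have "generate G S \<subseteq> ev G ` lists (UNIV \<times> S)" by blast
  moreover have "countable (ev G ` lists (UNIV \<times> S))" using S by simp
  ultimately show ?thesis by (rule countable_subset)
qed

lemma relabel_bij:
  assumes Hc: "countable Hc" "infinite Hc" and F: "finite F" "F \<subseteq> Npos"
    and phi: "inj_on \<phi> F" "\<phi> ` F \<subseteq> Hc"
  shows "\<exists>\<beta>. bij_betw \<beta> Npos Hc \<and> (\<forall>x\<in>F. \<beta> x = \<phi> x)"
proof -
  define N' where "N' = Npos - F"
  define H' where "H' = Hc - \<phi> ` F"
  have cN: "countable N'" "infinite N'" unfolding N'_def using F infinite_Npos by auto
  have cH: "countable H'" "infinite H'" unfolding H'_def using Hc F by auto
  have b1: "bij_betw (from_nat_into N') UNIV N'" by (rule bij_betw_from_nat_into[OF cN])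
  have b2: "bij_betw (from_nat_into H') UNIV H'" by (rule bij_betw_from_nat_into[OF cH])
  define \<gamma> where "\<gamma> x = from_nat_into H' (inv_into UNIV (from_nat_into N') x)" for x
  have bg: "bij_betw \<gamma> N' H'"
    using bij_betw_trans[OF bij_betw_inv_into[OF b1] b2] unfolding \<gamma>_def by (simp add: comp_def)
  define \<beta> where "\<beta> x = (if x \<in> F then \<phi> x else \<gamma> x)" for x
  have bF: "bij_betw \<beta> F (\<phi> ` F)"
    using phi(1) unfolding \<beta>_def bij_betw_def inj_on_def by auto
  have bN: "bij_betw \<beta> N' H'"
    using bg unfolding \<beta>_def N'_def by (rule bij_betw_cong[THEN iffD1, rotated]) auto
  have "bij_betw \<beta> (F \<union> N') (\<phi> ` F \<union> H')"
    by (rule bij_betw_combine[OF bF bN]) (auto simp: H'_def)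
  moreover have "F \<union> N' = Npos" "\<phi> ` F \<union> H' = Hc" using F phi unfolding N'_def H'_def by auto
  ultimately show ?thesis unfolding \<beta>_def by auto
qed

inductive inN :: "(nat \<times> nat \<Rightarrow> nat) \<Rightarrow> nat \<Rightarrow> nat \<Rightarrow> bool" for T a where
  inN_base: "inN T a 1"
| inN_ra: "inN T a x \<Longrightarrow> inN T a (T (x, a))"
| inN_rinv: "inN T a x \<Longrightarrow> e \<in> Npos \<Longrightarrow> T (a, e) = 1 \<Longrightarrow> inN T a (T (x, e))"
| inN_cj: "inN T a x \<Longrightarrow> c \<in> Npos \<Longrightarrow> d \<in> Npos \<Longrightarrow> T (c, d) = 1 \<Longrightarrow> inN T a (T (T (c, x), d))"

lemma Suc0_Npos[simp]: "Suc 0 \<in> Npos" by (simp add: Npos_def)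

definition pull :: "('g, 'm) monoid_scheme \<Rightarrow> (nat \<Rightarrow> 'g) \<Rightarrow> nat \<times> nat \<Rightarrow> nat" where
  "pull K \<beta> = (\<lambda>p. if p \<in> Npos \<times> Npos then inv_into Npos \<beta> (\<beta> (fst p) \<otimes>\<^bsub>K\<^esub> \<beta> (snd p)) else undefined)"

lemma topspace_table: "topspace table_top = (\<Pi>\<^sub>E p\<in>Npos \<times> Npos. Npos)"
  unfolding table_top_def by simp

lemma pull_props:
  assumes K: "group K" and H: "subgroup Hc K" and b: "bij_betw \<beta> Npos Hc" and b1: "\<beta> 1 = \<one>\<^bsub>K\<^esub>"
  shows "pull K \<beta> \<in> topspace table_top"
    "\<And>x y. x \<in> Npos \<Longrightarrow> y \<in> Npos \<Longrightarrow> \<beta> (pull K \<beta> (x, y)) = \<beta> x \<otimes>\<^bsub>K\<^esub> \<beta> y"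
    "\<And>p q. p \<in> Hc \<Longrightarrow> q \<in> Hc \<Longrightarrow> pull K \<beta> (inv_into Npos \<beta> p, inv_into Npos \<beta> q) = inv_into Npos \<beta> (p \<otimes>\<^bsub>K\<^esub> q)"
    "group (grp_of (pull K \<beta>))"
proof -
  interpret K: group K by (rule K)
  have mc: "p \<otimes>\<^bsub>K\<^esub> q \<in> Hc" if "p \<in> Hc" "q \<in> Hc" for p q using subgroup.m_closed[OF H that] .
  have bin: "\<beta> x \<in> Hc" if "x \<in> Npos" for x using b that bij_betwE by blast
  have iin: "inv_into Npos \<beta> p \<in> Npos" if "p \<in> Hc" for p
    using b that by (metis bij_betw_def inv_into_into)
  have bi: "\<beta> (inv_into Npos \<beta> p) = p" if "p \<in> Hc" for p
    using b that by (simp add: bij_betw_inv_into_right)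
  have ib: "inv_into Npos \<beta> (\<beta> x) = x" if "x \<in> Npos" for x
    using b that by (simp add: bij_betw_inv_into_left)
  have injb: "x = y" if "x \<in> Npos" "y \<in> Npos" "\<beta> x = \<beta> y" for x y
    using ib that by metis
  have pv: "pull K \<beta> (x, y) = inv_into Npos \<beta> (\<beta> x \<otimes>\<^bsub>K\<^esub> \<beta> y)" if "x \<in> Npos" "y \<in> Npos" for x y
    using that by (simp add: pull_def)
  have pN: "pull K \<beta> (x, y) \<in> Npos" if "x \<in> Npos" "y \<in> Npos" for x y
    using pv[OF that] iin[OF mc[OF bin bin]] that by simp
  show "pull K \<beta> \<in> topspace table_top"
    unfolding topspace_table PiE_def Pi_def extensional_def using pN by (auto simp: pull_def)
  show bp: "\<beta> (pull K \<beta> (x, y)) = \<beta> x \<otimes>\<^bsub>K\<^esub> \<beta> y" if "x \<in> Npos" "y \<in> Npos" for x y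
    using pv[OF that] bi[OF mc[OF bin bin]] that by simp
  show "pull K \<beta> (inv_into Npos \<beta> p, inv_into Npos \<beta> q) = inv_into Npos \<beta> (p \<otimes>\<^bsub>K\<^esub> q)"
    if "p \<in> Hc" "q \<in> Hc" for p q
    using pv[OF iin iin] bi that by simp
  have Hsub: "Hc \<subseteq> carrier K" using H subgroup.subset by blast
  have bc: "\<beta> x \<in> carrier K" if "x \<in> Npos" for x using bin[OF that] Hsub by blast
  show "group (grp_of (pull K \<beta>))"
  proof (rule groupI)
    fix x y assume "x \<in> carrier (grp_of (pull K \<beta>))" "y \<in> carrier (grp_of (pull K \<beta>))"
    then show "x \<otimes>\<^bsub>grp_of (pull K \<beta>)\<^esub> y \<in> carrier (grp_of (pull K \<beta>))" using pN by simp
  next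
    show "\<one>\<^bsub>grp_of (pull K \<beta>)\<^esub> \<in> carrier (grp_of (pull K \<beta>))" by simp
  next
    fix x y z assume "x \<in> carrier (grp_of (pull K \<beta>))" "y \<in> carrier (grp_of (pull K \<beta>))" "z \<in> carrier (grp_of (pull K \<beta>))"
    then have xyz: "x \<in> Npos" "y \<in> Npos" "z \<in> Npos" by simp_all
    have "\<beta> (pull K \<beta> (pull K \<beta> (x, y), z)) = \<beta> x \<otimes>\<^bsub>K\<^esub> \<beta> y \<otimes>\<^bsub>K\<^esub> \<beta> z"
      using bp pN xyz by simp
    also have "\<dots> = \<beta> x \<otimes>\<^bsub>K\<^esub> (\<beta> y \<otimes>\<^bsub>K\<^esub> \<beta> z)" using K.m_assoc bc xyz by simp
    also have "\<dots> = \<beta> (pull K \<beta> (x, pull K \<beta> (y, z)))" using bp pN xyz by simp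
    finally have "pull K \<beta> (pull K \<beta> (x, y), z) = pull K \<beta> (x, pull K \<beta> (y, z))"
      using injb pN xyz by metis
    then show "x \<otimes>\<^bsub>grp_of (pull K \<beta>)\<^esub> y \<otimes>\<^bsub>grp_of (pull K \<beta>)\<^esub> z =
        x \<otimes>\<^bsub>grp_of (pull K \<beta>)\<^esub> (y \<otimes>\<^bsub>grp_of (pull K \<beta>)\<^esub> z)" by simp
  next
    fix x assume "x \<in> carrier (grp_of (pull K \<beta>))"
    then have x: "x \<in> Npos" by simp
    have "\<beta> (pull K \<beta> (1, x)) = \<beta> x" using bp[of 1 x] x b1 bc[OF x] by simp
    then have "pull K \<beta> (1, x) = x" using injb pN x by (metis one_Npos)
    then show "\<one>\<^bsub>grp_of (pull K \<beta>)\<^esub> \<otimes>\<^bsub>grp_of (pull K \<beta>)\<^esub> x = x" by simp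
  next
    fix x assume "x \<in> carrier (grp_of (pull K \<beta>))"
    then have x: "x \<in> Npos" by simp
    define y where "y = inv_into Npos \<beta> (inv\<^bsub>K\<^esub> (\<beta> x))"
    have ih: "inv\<^bsub>K\<^esub> (\<beta> x) \<in> Hc" using subgroup.m_inv_closed[OF H bin[OF x]] .
    have y: "y \<in> Npos" unfolding y_def using iin[OF ih] .
    have "\<beta> (pull K \<beta> (y, x)) = \<beta> 1" using bp[OF y x] bi[OF ih] b1 bc[OF x] unfolding y_def by simp
    then have "pull K \<beta> (y, x) = 1" using injb pN y x by (metis one_Npos)
    then show "\<exists>y\<in>carrier (grp_of (pull K \<beta>)). y \<otimes>\<^bsub>grp_of (pull K \<beta>)\<^esub> x = \<one>\<^bsub>grp_of (pull K \<beta>)\<^esub>"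
      using y by auto
  qed
qed

lemma (in group) inv_cancel_left'': "x \<in> carrier G \<Longrightarrow> y \<in> carrier G \<Longrightarrow> x \<otimes> (inv x \<otimes> y) = y"
  by (simp add: m_assoc[symmetric])

lemma ncl_to_inN:
  assumes K: "group K" and H: "subgroup Hc K" and b: "bij_betw \<beta> Npos Hc" and b1: "\<beta> 1 = \<one>\<^bsub>K\<^esub>"
    and a: "a \<in> Npos"
  shows "y \<in> ncl K Hc (\<beta> a) \<Longrightarrow> inN (pull K \<beta>) a (inv_into Npos \<beta> y)"
proof (induct rule: ncl.induct)
  interpret K: group K by (rule K)
  let ?T = "pull K \<beta>" and ?bi = "inv_into Npos \<beta>"
  have bin: "\<beta> x \<in> Hc" if "x \<in> Npos" for x using b that bij_betwE by blast
  have iin: "?bi p \<in> Npos" if "p \<in> Hc" for p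
    using b that by (metis bij_betw_def inv_into_into)
  have ib: "?bi (\<beta> x) = x" if "x \<in> Npos" for x
    using b that by (simp add: bij_betw_inv_into_left)
  have Tm: "?T (?bi p, ?bi q) = ?bi (p \<otimes>\<^bsub>K\<^esub> q)" if "p \<in> Hc" "q \<in> Hc" for p q
    using pull_props(3)[OF K H b b1 that] .
  have Hsub: "Hc \<subseteq> carrier K" using H subgroup.subset by blast
  have u: "\<beta> a \<in> Hc" using bin[OF a] .
  have ua: "?bi (\<beta> a) = a" using ib[OF a] .
  have i1: "?bi \<one>\<^bsub>K\<^esub> = 1" using ib[of 1] b1 by simp
  have invH: "inv\<^bsub>K\<^esub> g \<in> Hc" if "g \<in> Hc" for g using subgroup.m_inv_closed[OF H that] .
  have mH: "p \<otimes>\<^bsub>K\<^esub> q \<in> Hc" if "p \<in> Hc" "q \<in> Hc" for p q using subgroup.m_closed[OF H that] .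
  have Tinv1: "?T (?bi (inv\<^bsub>K\<^esub> g), ?bi g) = 1" "?T (?bi g, ?bi (inv\<^bsub>K\<^esub> g)) = 1" if g: "g \<in> Hc" for g
  proof -
    have gc: "g \<in> carrier K" using g Hsub by blast
    show "?T (?bi (inv\<^bsub>K\<^esub> g), ?bi g) = 1" using Tm[OF invH[OF g] g] gc i1 by simp
    show "?T (?bi g, ?bi (inv\<^bsub>K\<^esub> g)) = 1" using Tm[OF g invH[OF g]] gc i1 by simp
  qed
  have step: "inN ?T a (?bi (y \<otimes>\<^bsub>K\<^esub> (g \<otimes>\<^bsub>K\<^esub> v \<otimes>\<^bsub>K\<^esub> inv\<^bsub>K\<^esub> g)))"
    if y: "y \<in> Hc" and g: "g \<in> Hc" and v: "v \<in> Hc" and IH: "inN ?T a (?bi y)"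
    and vstep: "\<And>m. m \<in> Hc \<Longrightarrow> inN ?T a (?bi m) \<Longrightarrow> inN ?T a (?bi (m \<otimes>\<^bsub>K\<^esub> v))" for y g v
  proof -
    have c: "y \<in> carrier K" "g \<in> carrier K" "v \<in> carrier K" using y g v Hsub by auto
    define m1 where "m1 = inv\<^bsub>K\<^esub> g \<otimes>\<^bsub>K\<^esub> y \<otimes>\<^bsub>K\<^esub> g"
    have m1H: "m1 \<in> Hc" unfolding m1_def using mH invH y g by simp
    have "inN ?T a (?T (?T (?bi (inv\<^bsub>K\<^esub> g), ?bi y), ?bi g))"
      by (rule inN_cj[OF IH iin[OF invH[OF g]] iin[OF g] Tinv1(1)[OF g]])
    moreover have "?T (?T (?bi (inv\<^bsub>K\<^esub> g), ?bi y), ?bi g) = ?bi m1"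
      unfolding m1_def using Tm invH mH y g by simp
    ultimately have s1: "inN ?T a (?bi m1)" by simp
    have s2: "inN ?T a (?bi (m1 \<otimes>\<^bsub>K\<^esub> v))" by (rule vstep[OF m1H s1])
    have m2H: "m1 \<otimes>\<^bsub>K\<^esub> v \<in> Hc" using mH m1H v by simp
    have "inN ?T a (?T (?T (?bi g, ?bi (m1 \<otimes>\<^bsub>K\<^esub> v)), ?bi (inv\<^bsub>K\<^esub> g)))"
      by (rule inN_cj[OF s2 iin[OF g] iin[OF invH[OF g]] Tinv1(2)[OF g]])
    moreover have "?T (?T (?bi g, ?bi (m1 \<otimes>\<^bsub>K\<^esub> v)), ?bi (inv\<^bsub>K\<^esub> g)) = ?bi (g \<otimes>\<^bsub>K\<^esub> (m1 \<otimes>\<^bsub>K\<^esub> v) \<otimes>\<^bsub>K\<^esub> inv\<^bsub>K\<^esub> g)"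
      using Tm invH mH m2H g by simp
    moreover have "g \<otimes>\<^bsub>K\<^esub> (m1 \<otimes>\<^bsub>K\<^esub> v) \<otimes>\<^bsub>K\<^esub> inv\<^bsub>K\<^esub> g = y \<otimes>\<^bsub>K\<^esub> (g \<otimes>\<^bsub>K\<^esub> v \<otimes>\<^bsub>K\<^esub> inv\<^bsub>K\<^esub> g)"
      unfolding m1_def using c by (simp add: K.m_assoc K.inv_cancel_left'')
    ultimately show ?thesis by simp
  qed
  {
    case ncl_one
    show ?case using i1 inN_base by simp
  next
    case (ncl_pos y g)
    have yH: "y \<in> Hc" using K.ncl_sub[OF H u ncl_pos(1)] .
    show ?case
    proof (rule step[OF yH ncl_pos(3) u ncl_pos(2)])
      fix m assume mH': "m \<in> Hc" and im: "inN ?T a (?bi m)"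
      have "inN ?T a (?T (?bi m, a))" by (rule inN_ra[OF im])
      moreover have "?T (?bi m, a) = ?bi (m \<otimes>\<^bsub>K\<^esub> \<beta> a)" using Tm[OF mH' u] ua by simp
      ultimately show "inN ?T a (?bi (m \<otimes>\<^bsub>K\<^esub> \<beta> a))" by simp
    qed
  next
    case (ncl_neg y g)
    have yH: "y \<in> Hc" using K.ncl_sub[OF H u ncl_neg(1)] .
    show ?case
    proof (rule step[OF yH ncl_neg(3) invH[OF u] ncl_neg(2)])
      fix m assume mH': "m \<in> Hc" and im: "inN ?T a (?bi m)"
      have "?T (a, ?bi (inv\<^bsub>K\<^esub> \<beta> a)) = 1" using Tinv1(2)[OF u] ua by simp
      then have "inN ?T a (?T (?bi m, ?bi (inv\<^bsub>K\<^esub> \<beta> a)))" by (rule inN_rinv[OF im iin[OF invH[OF u]]])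
      moreover have "?T (?bi m, ?bi (inv\<^bsub>K\<^esub> \<beta> a)) = ?bi (m \<otimes>\<^bsub>K\<^esub> inv\<^bsub>K\<^esub> \<beta> a)" using Tm[OF mH' invH[OF u]] by simp
      ultimately show "inN ?T a (?bi (m \<otimes>\<^bsub>K\<^esub> inv\<^bsub>K\<^esub> \<beta> a))" by simp
    qed
  }
qed

lemma Gtables_D: "A \<in> Gtables \<Longrightarrow> A \<in> topspace table_top \<and> group (grp_of A)"
  by (simp add: Gtables_def)

lemma density:
  assumes A: "A \<in> Gtables" and a: "a \<in> Npos" and a1: "a \<noteq> 1" and b: "b \<in> Npos" and P: "finite P"
  shows "\<exists>A'\<in>Gtables. (\<forall>p\<in>P \<inter> (Npos \<times> Npos). A' p = A p) \<and> inN A' a b"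
proof -
  have grp: "group (grp_of A)" using Gtables_D[OF A] by blast
  interpret G: group "grp_of A" by (rule grp)
  interpret BG: group "BijGroup XX" by (rule group_BijGroup)
  obtain Sg where Sg: "countable Sg" "Sg \<subseteq> Bij XX" "psi A ` Npos \<subseteq> Sg"
    and bN: "psi A b \<in> ncl (BijGroup XX) (generate (BijGroup XX) Sg) (psi A a)"
    using group_core[OF grp a a1 b] by blast
  define Hc where "Hc = generate (BijGroup XX) Sg"
  have SgC: "Sg \<subseteq> carrier (BijGroup XX)" using Sg(2) by simp
  have Hs: "subgroup Hc (BijGroup XX)" unfolding Hc_def by (rule BG.generate_is_subgroup[OF SgC])
  have cH: "countable Hc" unfolding Hc_def by (rule BG.countable_generate[OF Sg(1) SgC])
  have psiH: "psi A ` Npos \<subseteq> Hc"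
  proof
    fix x assume "x \<in> psi A ` Npos"
    then have "x \<in> Sg" using Sg(3) by auto
    then show "x \<in> Hc" unfolding Hc_def by (rule generate.incl)
  qed
  have iH: "infinite Hc"
  proof
    assume "finite Hc"
    then have "finite (psi A ` Npos)" using psiH by (rule finite_subset[rotated])
    then have "finite Npos" by (rule finite_imageD[OF _ psi_inj[OF grp]])
    then show False using infinite_Npos by simp
  qed
  define P' where "P' = P \<inter> (Npos \<times> Npos)"
  define F where "F = {1, a, b} \<union> fst ` P' \<union> snd ` P' \<union> A ` P'"
  have fP': "finite P'" unfolding P'_def using P by simp
  have fF: "finite F" unfolding F_def using fP' by simp
  have P'N: "fst p \<in> Npos \<and> snd p \<in> Npos" if "p \<in> P'" for p
    using that unfolding P'_def by (auto simp: mem_Times_iff)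
  have AP: "A p \<in> Npos" if "p \<in> P'" for p
  proof -
    have "A (fst p, snd p) \<in> Npos" using G.m_closed[of "fst p" "snd p"] P'N[OF that] by simp
    then show ?thesis by simp
  qed
  have "fst ` P' \<subseteq> Npos" "snd ` P' \<subseteq> Npos" "A ` P' \<subseteq> Npos" using P'N AP by blast+
  then have FN: "F \<subseteq> Npos" unfolding F_def using a b by simp
  have pF: "psi A ` F \<subseteq> Hc" using psiH FN by (meson image_mono order_trans)
  obtain \<beta> where bij: "bij_betw \<beta> Npos Hc" and bF: "\<forall>x\<in>F. \<beta> x = psi A x"
    using relabel_bij[OF cH iH fF FN inj_on_subset[OF psi_inj[OF grp] FN] pF] by blast
  have gh: "group_hom (grp_of A) (BijGroup XX) (psi A)"
    by (simp add: group_hom_def group_hom_axioms_def grp group_BijGroup psi_hom[OF grp])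
  have b1: "\<beta> 1 = \<one>\<^bsub>BijGroup XX\<^esub>" using bF group_hom.hom_one[OF gh] unfolding F_def by simp
  define A' where "A' = pull (BijGroup XX) \<beta>"
  have A'G: "A' \<in> Gtables" unfolding A'_def Gtables_def
    using pull_props(1,4)[OF group_BijGroup Hs bij b1] by blast
  have ib: "inv_into Npos \<beta> (\<beta> x) = x" if "x \<in> Npos" for x
    using bij that by (simp add: bij_betw_inv_into_left)
  have agree: "A' p = A p" if p: "p \<in> P'" for p
  proof -
    obtain x y where xy: "p = (x, y)" by force
    have pP: "(x, y) \<in> P'" using p xy by simp
    have "x \<in> fst ` P'" using pP by (metis fst_conv image_eqI)
    then have x: "x \<in> F" "x \<in> Npos" using FN unfolding F_def by blast+
    have "y \<in> snd ` P'" using pP by (metis snd_conv image_eqI)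
    then have y: "y \<in> F" "y \<in> Npos" using FN unfolding F_def by blast+
    have "A (x, y) \<in> A ` P'" using pP by (rule imageI)
    then have Axy: "A (x, y) \<in> F" "A (x, y) \<in> Npos" using FN unfolding F_def by blast+
    have "A' p = inv_into Npos \<beta> (\<beta> x \<otimes>\<^bsub>BijGroup XX\<^esub> \<beta> y)"
      using x y xy by (simp add: A'_def pull_def)
    also have "\<beta> x \<otimes>\<^bsub>BijGroup XX\<^esub> \<beta> y = psi A (A (x, y))"
      using bF x y group_hom.hom_mult[OF gh, of x y] by simp
    also have "\<dots> = \<beta> (A (x, y))" using bF Axy by simp
    also have "inv_into Npos \<beta> \<dots> = A (x, y)" using ib Axy by simp
    finally show ?thesis using xy by simp
  qed
  have "\<beta> a = psi A a" "\<beta> b = psi A b" using bF unfolding F_def by auto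
  then have "psi A b \<in> ncl (BijGroup XX) Hc (\<beta> a)" using bN unfolding Hc_def by simp
  then have "inN A' a (inv_into Npos \<beta> (psi A b))"
    unfolding A'_def by (rule ncl_to_inN[OF group_BijGroup Hs bij b1 a])
  moreover have "inv_into Npos \<beta> (psi A b) = b" using ib[OF b] \<open>\<beta> b = psi A b\<close> by simp
  ultimately have "inN A' a b" by simp
  then show ?thesis using A'G agree unfolding P'_def by blast
qed

lemma inN_sound:
  assumes grp: "group (grp_of T)" and a: "a \<in> Npos" and N: "N \<lhd> grp_of T" and aN: "a \<in> N"
  shows "inN T a x \<Longrightarrow> x \<in> N"
proof (induct rule: inN.induct)
  interpret G: group "grp_of T" by (rule grp)
  interpret N: normal N "grp_of T" by (rule N)
  have NN: "N \<subseteq> Npos" using N.subset by simp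
  {
    case inN_base show ?case using N.one_closed by simp
  next
    case (inN_ra x) then show ?case using N.m_closed[of x a] aN by simp
  next
    case (inN_rinv x e)
    have "inv\<^bsub>grp_of T\<^esub> e = a" using G.inv_equality[of a e] inN_rinv a by simp
    then have "e = inv\<^bsub>grp_of T\<^esub> a" using G.inv_inv[of e] inN_rinv by simp
    then have "e \<in> N" using N.m_inv_closed[OF aN] by simp
    then show ?case using N.m_closed[of x e] inN_rinv by simp
  next
    case (inN_cj x c d)
    have "inv\<^bsub>grp_of T\<^esub> d = c" using G.inv_equality[of c d] inN_cj by simp
    then have "d = inv\<^bsub>grp_of T\<^esub> c" using G.inv_inv[of d] inN_cj by simp
    then show ?case using N.inv_op_closed2[of c x] inN_cj by simp
  }
qed

lemma inN_local:
  "inN T a x \<Longrightarrow> \<exists>P. finite P \<and> (\<forall>T'. (\<forall>p\<in>P. T' p = T p) \<longrightarrow> inN T' a x)"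
proof (induct rule: inN.induct)
  case inN_base
  have "\<forall>T'. inN T' a 1" using inN.inN_base by blast
  then show ?case by blast
next
  case (inN_ra x)
  then obtain P where P: "finite P" "\<forall>T'. (\<forall>p\<in>P. T' p = T p) \<longrightarrow> inN T' a x" by blast
  show ?case
  proof (rule exI[of _ "insert (x, a) P"], intro conjI allI impI)
    show "finite (insert (x, a) P)" using P by simp
    fix T' assume e: "\<forall>p\<in>insert (x, a) P. T' p = T p"
    then have "inN T' a (T' (x, a))" using P by (intro inN.inN_ra) simp
    then show "inN T' a (T (x, a))" using e by simp
  qed
next
  case (inN_rinv x e)
  then obtain P where P: "finite P" "\<forall>T'. (\<forall>p\<in>P. T' p = T p) \<longrightarrow> inN T' a x" by blast
  show ?case
  proof (rule exI[of _ "insert (x, e) (insert (a, e) P)"], intro conjI allI impI)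
    show "finite (insert (x, e) (insert (a, e) P))" using P by simp
    fix T' assume q: "\<forall>p\<in>insert (x, e) (insert (a, e) P). T' p = T p"
    then have "inN T' a (T' (x, e))" using P inN_rinv by (intro inN.inN_rinv) simp_all
    then show "inN T' a (T (x, e))" using q by simp
  qed
next
  case (inN_cj x c d)
  then obtain P where P: "finite P" "\<forall>T'. (\<forall>p\<in>P. T' p = T p) \<longrightarrow> inN T' a x" by blast
  show ?case
  proof (rule exI[of _ "insert (c, x) (insert (T (c, x), d) (insert (c, d) P))"], intro conjI allI impI)
    show "finite (insert (c, x) (insert (T (c, x), d) (insert (c, d) P)))" using P by simp
    fix T' assume q: "\<forall>p\<in>insert (c, x) (insert (T (c, x), d) (insert (c, d) P)). T' p = T p"
    then have "inN T' a (T' (T' (c, x), d))" using P inN_cj by (intro inN.inN_cj) simp_all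
    then show "inN T' a (T (T (c, x), d))" using q by simp
  qed
qed

lemma table_top_alt: "table_top = product_topology (\<lambda>_. discrete_topology Npos) (Npos \<times> Npos)"
  by (rule table_top_def)

lemma basic_open:
  assumes A: "A \<in> topspace table_top" and P: "finite P"
  shows "openin table_top {f \<in> topspace table_top. \<forall>p\<in>P. f p = A p}"
  unfolding table_top_alt openin_product_topology_alt
proof (intro ballI)
  let ?I = "Npos \<times> Npos"
  have AI: "A \<in> (\<Pi>\<^sub>E p\<in>?I. Npos)" using A topspace_table by simp
  fix f assume f: "f \<in> {f \<in> topspace (product_topology (\<lambda>_. discrete_topology Npos) ?I). \<forall>p\<in>P. f p = A p}"
  define U where "U i = (if i \<in> P then {A i} else Npos)" for i
  have fI: "f \<in> (\<Pi>\<^sub>E p\<in>?I. Npos)" and fP: "\<forall>p\<in>P. f p = A p" using f by auto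
  show "\<exists>U. finite {i \<in> ?I. U i \<noteq> topspace (discrete_topology Npos)} \<and>
             (\<forall>i\<in>?I. openin (discrete_topology Npos) (U i)) \<and>
             f \<in> Pi\<^sub>E ?I U \<and> Pi\<^sub>E ?I U \<subseteq> {f \<in> topspace (product_topology (\<lambda>_. discrete_topology Npos) ?I). \<forall>p\<in>P. f p = A p}"
  proof (intro exI[of _ U] conjI)
    have "{i \<in> ?I. U i \<noteq> topspace (discrete_topology Npos)} \<subseteq> P" unfolding U_def by auto
    then show "finite {i \<in> ?I. U i \<noteq> topspace (discrete_topology Npos)}" using P finite_subset by blast
    show "\<forall>i\<in>?I. openin (discrete_topology Npos) (U i)"
      unfolding U_def using AI by (auto simp: PiE_def Pi_def)
    show "f \<in> Pi\<^sub>E ?I U" using fI fP unfolding U_def by (auto simp: PiE_def Pi_def)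
    show "Pi\<^sub>E ?I U \<subseteq> {f \<in> topspace (product_topology (\<lambda>_. discrete_topology Npos) ?I). \<forall>p\<in>P. f p = A p}"
    proof
      fix g assume g: "g \<in> Pi\<^sub>E ?I U"
      have UN: "U i \<subseteq> Npos" if "i \<in> ?I" for i unfolding U_def using AI that by (auto simp: PiE_def Pi_def)
      have gi: "g i \<in> Npos" if "i \<in> ?I" for i
      proof -
        have "g i \<in> U i" using g that by (auto simp: PiE_def Pi_def)
        then show ?thesis using UN[OF that] by blast
      qed
      have "g \<in> (\<Pi>\<^sub>E p\<in>?I. Npos)" using g gi by (auto simp: PiE_def Pi_def)
      moreover have "g p = A p" if "p \<in> P" for p
      proof (cases "p \<in> ?I")
        case True
        then have "g p \<in> U p" using g by (auto simp: PiE_def Pi_def)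
        then show ?thesis using that unfolding U_def by simp
      next
        case False
        have "g \<in> extensional ?I" using g by (simp add: PiE_def)
        then have "g p = undefined" using False by (rule extensional_arb)
        moreover have "A \<in> extensional ?I" using AI by (simp add: PiE_def)
        then have "A p = undefined" using False by (rule extensional_arb)
        ultimately show ?thesis by simp
      qed
      ultimately show "g \<in> {f \<in> topspace (product_topology (\<lambda>_. discrete_topology Npos) ?I). \<forall>p\<in>P. f p = A p}"
        by simp
    qed
  qed
qed

lemma nbhd:
  assumes Oo: "openin table_top Ob" and A: "A \<in> Ob"
  shows "\<exists>P. finite P \<and> (\<forall>f\<in>topspace table_top. (\<forall>p\<in>P \<inter> (Npos \<times> Npos). f p = A p) \<longrightarrow> f \<in> Ob)"
proof -
  let ?I = "Npos \<times> Npos"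
  obtain U where U: "finite {i \<in> ?I. U i \<noteq> Npos}" "\<forall>i\<in>?I. openin (discrete_topology Npos) (U i)"
    "A \<in> Pi\<^sub>E ?I U" "Pi\<^sub>E ?I U \<subseteq> Ob"
    using Oo A unfolding table_top_alt openin_product_topology_alt by force
  define P where "P = {i \<in> ?I. U i \<noteq> Npos}"
  have "f \<in> Ob" if f: "f \<in> topspace table_top" and ag: "\<forall>p\<in>P \<inter> ?I. f p = A p" for f
  proof -
    have fI: "f \<in> (\<Pi>\<^sub>E p\<in>?I. Npos)" using f topspace_table by simp
    have "f \<in> Pi\<^sub>E ?I U"
    proof -
      have "f i \<in> U i" if i: "i \<in> ?I" for i
      proof (cases "i \<in> P")
        case True then show ?thesis using ag U(3) i by (auto simp: PiE_def Pi_def)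
      next
        case False then have "U i = Npos" using i unfolding P_def by simp
        then show ?thesis using fI i by (auto simp: PiE_def Pi_def)
      qed
      then show ?thesis using fI by (auto simp: PiE_def Pi_def)
    qed
    then show ?thesis using U(4) by blast
  qed
  then show ?thesis using U(1) unfolding P_def by blast
qed

lemma Gtables_sub: "Gtables \<subseteq> topspace table_top"
  unfolding Gtables_def by blast

lemma U_open:
  assumes a: "a \<in> Npos"
  shows "openin (subtopology table_top Gtables) {A \<in> Gtables. inN A a b}"
proof (subst openin_subopen, intro ballI)
  fix A assume A: "A \<in> {A \<in> Gtables. inN A a b}"
  have iA: "inN A a b" using A by simp
  obtain P where P: "finite P" "\<forall>T'. (\<forall>p\<in>P. T' p = A p) \<longrightarrow> inN T' a b"
    using inN_local[OF iA] by blast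
  define W where "W = {f \<in> topspace table_top. \<forall>p\<in>P. f p = A p}"
  have AT: "A \<in> topspace table_top" using A Gtables_sub by blast
  have "openin table_top W" unfolding W_def by (rule basic_open[OF AT P(1)])
  then have "openin (subtopology table_top Gtables) (W \<inter> Gtables)" by (rule openin_subtopology_Int)
  moreover have "A \<in> W \<inter> Gtables" using A AT unfolding W_def by simp
  moreover have "W \<inter> Gtables \<subseteq> {A \<in> Gtables. inN A a b}"
  proof
    fix f assume f: "f \<in> W \<inter> Gtables"
    then have "\<forall>p\<in>P. f p = A p" unfolding W_def by blast
    then have "inN f a b" using P(2) by blast
    then show "f \<in> {A \<in> Gtables. inN A a b}" using f by blast
  qed
  ultimately show "\<exists>T. openin (subtopology table_top Gtables) T \<and> A \<in> T \<and> T \<subseteq> {A \<in> Gtables. inN A a b}"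
    by blast
qed

lemma nowhere_dense_N:
  assumes a: "a \<in> Npos" and a1: "a \<noteq> 1" and b: "b \<in> Npos"
  shows "nowhere_dense_in (subtopology table_top Gtables) (Gtables - {A \<in> Gtables. inN A a b})"
proof -
  let ?T = "subtopology table_top Gtables"
  let ?U = "{A \<in> Gtables. inN A a b}"
  have tT: "topspace ?T = Gtables" using Gtables_sub by auto
  have e: "Gtables - (Gtables - ?U) = ?U" by blast
  have cl: "closedin ?T (Gtables - ?U)"
    unfolding closedin_def tT e using U_open[OF a, of b] by blast
  have "?T interior_of (Gtables - ?U) = {}"
    unfolding interior_of_eq_empty
  proof (intro allI impI)
    fix W assume W: "openin ?T W \<and> W \<subseteq> Gtables - ?U"
    show "W = {}"
    proof (rule ccontr)
      assume "W \<noteq> {}"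
      then obtain A where AW: "A \<in> W" by blast
      have "openin ?T W" using W by blast
      then obtain Ob where Ob: "openin table_top Ob" "W = Ob \<inter> Gtables"
        unfolding openin_subtopology by blast
      have AOb: "A \<in> Ob" "A \<in> Gtables" using AW Ob by auto
      obtain P where P: "finite P" "\<forall>f\<in>topspace table_top. (\<forall>p\<in>P \<inter> (Npos \<times> Npos). f p = A p) \<longrightarrow> f \<in> Ob"
        using nbhd[OF Ob(1) AOb(1)] by blast
      obtain A' where A': "A' \<in> Gtables" "\<forall>p\<in>P \<inter> (Npos \<times> Npos). A' p = A p" "inN A' a b"
        using density[OF AOb(2) a a1 b P(1)] by blast
      have "A' \<in> topspace table_top" using A'(1) Gtables_sub by blast
      then have "A' \<in> Ob" using P(2) A'(2) by blast
      then have "A' \<in> W" using Ob(2) A'(1) by blast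
      then have "A' \<notin> ?U" using W by blast
      moreover have "A' \<in> ?U" using A'(1,3) by blast
      ultimately show False by blast
    qed
  qed
  then show ?thesis unfolding nowhere_dense_in_def using closure_of_closedin[OF cl] tT by auto
qed

theorem corollary4p6:
  shows "comeager_in (subtopology table_top Gtables) {A \<in> Gtables. simple_grp (grp_of A)}"
proof -
  let ?T = "subtopology table_top Gtables"
  let ?S = "{A \<in> Gtables. simple_grp (grp_of A)}"
  have tT: "topspace ?T = Gtables" using Gtables_sub by auto
  define U where "U a b = {A \<in> Gtables. inN A a b}" for a b
  define Fam where "Fam = (\<lambda>(a, b). Gtables - U a b) ` ((Npos - {1}) \<times> Npos)"
  have cF: "countable Fam" unfolding Fam_def by simp
  have nF: "\<forall>N\<in>Fam. nowhere_dense_in ?T N"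
  proof
    fix N assume "N \<in> Fam"
    then obtain a b where ab: "a \<in> Npos" "a \<noteq> 1" "b \<in> Npos" "N = Gtables - U a b"
      unfolding Fam_def by blast
    show "nowhere_dense_in ?T N" unfolding ab(4) U_def by (rule nowhere_dense_N[OF ab(1-3)])
  qed
  have cov: "Gtables - ?S \<subseteq> \<Union>Fam"
  proof
    fix A assume A: "A \<in> Gtables - ?S"
    have AG: "A \<in> Gtables" using A by (rule DiffD1)
    have grp: "group (grp_of A)" using Gtables_D[OF AG] by (rule conjunct2)
    interpret G: group "grp_of A" by (rule grp)
    have two: "(2::nat) \<in> Npos" by (simp add: Npos_def)
    have "Npos \<noteq> {1}"
    proof
      assume "Npos = {1}"
      then have "(2::nat) \<in> {1}" using two by simp
      then show False by simp
    qed
    then have c1: "carrier (grp_of A) \<noteq> {\<one>\<^bsub>grp_of A\<^esub>}" by (metis grp_of_simps(1) grp_of_simps(3))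
    have "A \<notin> {A \<in> Gtables. simple_grp (grp_of A)}" using A by (simp only: Diff_iff not_False_eq_True)
    then have ns: "\<not> simple_grp (grp_of A)" using AG by (metis (no_types, lifting) mem_Collect_eq)
    have allH: "\<not> (\<forall>H. H \<lhd> grp_of A \<longrightarrow> H = {\<one>\<^bsub>grp_of A\<^esub>} \<or> H = carrier (grp_of A))"
    proof
      assume h: "\<forall>H. H \<lhd> grp_of A \<longrightarrow> H = {\<one>\<^bsub>grp_of A\<^esub>} \<or> H = carrier (grp_of A)"
      have "simple_grp (grp_of A)" unfolding simple_grp_def using grp c1 h by (intro conjI)
      then show False using ns by contradiction
    qed
    then obtain H where H0: "H \<lhd> grp_of A" "\<not> (H = {\<one>\<^bsub>grp_of A\<^esub>} \<or> H = carrier (grp_of A))"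
      by blast
    have H: "H \<lhd> grp_of A" "H \<noteq> {1}" "H \<noteq> Npos" using H0 by (simp_all only: grp_of_simps) blast+
    have Hsub: "subgroup H (grp_of A)" using H(1) by (rule normal_imp_subgroup)
    have HN: "H \<subseteq> Npos" using subgroup.subset[OF Hsub] by simp
    have H1: "1 \<in> H" using subgroup.one_closed[OF Hsub] by simp
    obtain a where a: "a \<in> H" "a \<noteq> 1" using H(2) H1 by blast
    obtain b where b: "b \<in> Npos" "b \<notin> H" using H(3) HN by blast
    have aN: "a \<in> Npos" using a HN by blast
    have "\<not> inN A a b" using inN_sound[OF grp aN H(1) a(1)] b(2) by blast
    then have "A \<in> Gtables - U a b" using A unfolding U_def by blast
    moreover have "(a, b) \<in> (Npos - {1}) \<times> Npos" using aN a(2) b(1) by simp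
    ultimately show "A \<in> \<Union>Fam" unfolding Fam_def by blast
  qed
  have "Gtables - ?S \<subseteq> Gtables" by blast
  then have "meager_in ?T (topspace ?T - ?S)"
    unfolding meager_in_def tT using cF nF cov by blast
  moreover have "?S \<subseteq> topspace ?T" unfolding tT by blast
  ultimately show ?thesis unfolding comeager_in_def by blast
qed

end
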